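(* Fix a positive integer $m$. For each $n\ge1$ and real coefficients $a^{\pm}_{i,j},b^{\pm}_{i,j}$ ($i+j\le n$) let $p^{\pm}=\sum_{i+j=0}^n a^{\pm}_{i,j}x^iy^j$, $q^{\pm}=\sum_{i+j=0}^n b^{\pm}_{i,j}x^iy^j$ and consider $$(\dot x,\dot y)=\begin{cases}(y+\epsilon p^+(x,y),\,-x+\epsilon q^+(x,y)), & y\ge x^{m},\\ (y+\epsilon p^-(x,y),\,-x+\epsilon q^-(x,y)), & y<x^{m}.\end{cases}$$ Let $H(n)$ be the supremum, over all coefficient choices for which the first order Melnikov function $M$ (defined in the context) is not identically zero on $(0,+\infty)$, of the number of zeros of $M$ in $(0,+\infty)$ counted with multiplicity. Then there exist nonnegative integers $k,l$ (independent of $n$) such that $H(n)\le kn+l$ for all $n\ge1$.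
   Context: For $h>0$, the circle $x^2+y^2=h$ meets the curve $y=x^{m}$ at exactly two points $A_h=(-s,(-s)^m)$ and $B_h=(s,s^m)$, where $s>0$ solves $s^2+s^{2m}=h$. $L_h^+$ is the arc of this circle in $\{y\ge x^{m}\}$, oriented clockwise from $A_h$ to $B_h$; $L_h^-$ is the arc in $\{y\le x^{m}\}$, oriented clockwise from $B_h$ to $A_h$. The first order Melnikov function is $M(h)=\int_{L_h^+}(q^+dx-p^+dy)+\int_{L_h^-}(q^-dx-p^-dy)$, $h\in(0,+\infty)$. *)

theory Defs
  imports "HOL-Analysis.Analysis" "HOL-Library.Extended_Nat"
begin

definition poly2 :: "nat \<Rightarrow> (nat \<Rightarrow> nat \<Rightarrow> real) \<Rightarrow> real \<Rightarrow> real \<Rightarrow> real" where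
  "poly2 n c x y = (\<Sum>i\<le>n. \<Sum>j\<le>n - i. c i j * x ^ i * y ^ j)"

definition sol_s :: "nat \<Rightarrow> real \<Rightarrow> real" where
  "sol_s m h = (THE s. s > 0 \<and> s ^ 2 + s ^ (2 * m) = h)"

text \<open>Line integral of the 1-form Q dx - P dy along the circle of radius r,
  parametrized by (r cos t, r sin t), traversed clockwise from angle alpha
  down to angle beta (beta \<le> alpha). Since dx = -r sin t dt, dy = r cos t dt,
  the integral from t = alpha to t = beta equals the integral below.\<close>
definition cw_arc_int ::
  "(real \<Rightarrow> real \<Rightarrow> real) \<Rightarrow> (real \<Rightarrow> real \<Rightarrow> real) \<Rightarrow> real \<Rightarrow> real \<Rightarrow> real \<Rightarrow> real" where
  "cw_arc_int P Q r alpha beta =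
     integral {beta..alpha}
       (\<lambda>t. Q (r * cos t) (r * sin t) * (r * sin t) + P (r * cos t) (r * sin t) * (r * cos t))"

text \<open>B_h = (s, s^m) has polar angle arctan(s^m/s);
  A_h = (-s, (-s)^m) has polar angle pi + arctan((-s)^m/(-s)).
  L_h^+ : clockwise from A_h to B_h (through the top point (0, sqrt h));
  L_h^- : clockwise from B_h to A_h (through the bottom point).\<close>
definition melnikov ::
  "nat \<Rightarrow> nat \<Rightarrow> (nat \<Rightarrow> nat \<Rightarrow> real) \<Rightarrow> (nat \<Rightarrow> nat \<Rightarrow> real) \<Rightarrow>
   (nat \<Rightarrow> nat \<Rightarrow> real) \<Rightarrow> (nat \<Rightarrow> nat \<Rightarrow> real) \<Rightarrow> real \<Rightarrow> real" where
  "melnikov m n ap bp am bm h =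
     (let s = sol_s m h; r = sqrt h;
          thB = arctan (s ^ m / s);
          thA = pi + arctan ((-s) ^ m / (-s))
      in cw_arc_int (poly2 n ap) (poly2 n bp) r thA thB
       + cw_arc_int (poly2 n am) (poly2 n bm) r thB (thA - 2 * pi))"

definition zero_mult :: "(real \<Rightarrow> real) \<Rightarrow> real \<Rightarrow> enat" where
  "zero_mult f x = (if \<exists>k. (deriv ^^ k) f x \<noteq> 0
                    then enat (LEAST k. (deriv ^^ k) f x \<noteq> 0) else \<infinity>)"

definition zeros_mult :: "(real \<Rightarrow> real) \<Rightarrow> real set \<Rightarrow> enat" where
  "zeros_mult f S = (if finite {x \<in> S. f x = 0}
                     then (\<Sum>x\<in>{x \<in> S. f x = 0}. zero_mult f x) else \<infinity>)"

definition H_bound :: "nat \<Rightarrow> nat \<Rightarrow> enat" where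
  "H_bound m n = (SUP c \<in> {(ap, bp, am, bm). \<exists>h>0. melnikov m n ap bp am bm h \<noteq> 0}.
       (case c of (ap, bp, am, bm) \<Rightarrow> zeros_mult (melnikov m n ap bp am bm) {0<..}))"

end

theory Submission
  imports Defs "HOL-Computational_Algebra.Polynomial"
begin
definition smooth_on :: "real set \<Rightarrow> (real \<Rightarrow> real) \<Rightarrow> bool" where
  "smooth_on U f \<longleftrightarrow> (\<forall>i. \<forall>x\<in>U. (deriv ^^ i) f differentiable (at x))"

lemma funpow_deriv_Suc: "(deriv ^^ Suc i) f = (deriv ^^ i) (deriv f)"
  by (simp only: funpow_Suc_right comp_def)

lemma deriv_loc1:
  assumes "open U" "\<And>x. x \<in> U \<Longrightarrow> f x = g x" "x \<in> U"
  shows "deriv f x = deriv g x"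
proof (rule deriv_cong_ev)
  show "\<forall>\<^sub>F y in nhds x. f y = g y"
    using eventually_nhds_in_open[OF assms(1,3)] by (rule eventually_mono) (use assms(2) in auto)
qed simp

lemma deriv_loc:
  assumes "open U" "\<And>x. x \<in> U \<Longrightarrow> f x = g x" "x \<in> U"
  shows "(deriv ^^ i) f x = (deriv ^^ i) g x"
  using assms(2,3)
proof (induction i arbitrary: f g x)
  case 0 thus ?case by simp
next
  case (Suc i)
  have "\<And>y. y \<in> U \<Longrightarrow> deriv f y = deriv g y"
    using deriv_loc1[OF assms(1)] Suc.prems by blast
  from Suc.IH[OF this Suc.prems(2)] show ?case by (simp only: funpow_deriv_Suc)
qed

lemma diff_loc:
  fixes f g :: "real \<Rightarrow> real"
  assumes "open U" "\<And>x. x \<in> U \<Longrightarrow> f x = g x" "x \<in> U" "f differentiable (at x)"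
  shows "g differentiable (at x)"
proof -
  have "DERIV f x :> deriv f x" using assms(4) DERIV_deriv_iff_real_differentiable by blast
  hence "DERIV g x :> deriv f x"
    using has_field_derivative_transform_within_open[OF _ assms(1,3)] assms(2) by blast
  thus ?thesis using real_differentiable_def by blast
qed

lemma deriv_funpow_loc_diff:
  fixes f g :: "real \<Rightarrow> real"
  assumes "open U" "\<And>x. x \<in> U \<Longrightarrow> f x = g x" "x \<in> U" "(deriv ^^ i) f differentiable (at x)"
  shows "(deriv ^^ i) g differentiable (at x)"
  by (rule diff_loc[OF assms(1) _ assms(3,4)]) (rule deriv_loc[OF assms(1,2)])

lemma smooth_on_deriv: "smooth_on U f \<Longrightarrow> smooth_on U (deriv f)"
  unfolding smooth_on_def by (metis funpow_deriv_Suc)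

lemma smooth_on_diff: "smooth_on U f \<Longrightarrow> x \<in> U \<Longrightarrow> f differentiable (at x)"
  unfolding smooth_on_def by (metis funpow_0)

lemma smooth_on_DERIV: "smooth_on U f \<Longrightarrow> x \<in> U \<Longrightarrow> DERIV f x :> deriv f x"
  using smooth_on_diff DERIV_deriv_iff_real_differentiable by blast

lemma smooth_on_cong:
  assumes "open U" "\<And>x. x \<in> U \<Longrightarrow> f x = g x" "smooth_on U f"
  shows "smooth_on U g"
  using assms deriv_funpow_loc_diff unfolding smooth_on_def by blast

definition smooth_upto :: "real set \<Rightarrow> nat \<Rightarrow> (real \<Rightarrow> real) \<Rightarrow> bool" where
  "smooth_upto U k f \<longleftrightarrow> (\<forall>j<k. \<forall>x\<in>U. (deriv ^^ j) f differentiable (at x))"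

lemma smooth_upto_deriv: "smooth_upto U (Suc k) f \<Longrightarrow> smooth_upto U k (deriv f)"
  unfolding smooth_upto_def by (metis Suc_mono funpow_deriv_Suc)

lemma smooth_on_upto: "smooth_on U f \<Longrightarrow> smooth_upto U k f"
  unfolding smooth_on_def smooth_upto_def by blast

lemma smooth_upto_DERIV: "smooth_upto U (Suc k) f \<Longrightarrow> x \<in> U \<Longrightarrow> DERIV f x :> deriv f x"
  unfolding smooth_upto_def using DERIV_deriv_iff_real_differentiable
  by (metis funpow_0 zero_less_Suc)

lemma smooth_funpow_add:
  assumes "open U" "smooth_upto U i f" "smooth_upto U i g" "x \<in> U"
  shows "(deriv ^^ i) (\<lambda>x. f x + g x) x = (deriv ^^ i) f x + (deriv ^^ i) g x"
  using assms(2-4)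
proof (induction i arbitrary: f g x)
  case 0 thus ?case by simp
next
  case (Suc i)
  have "\<And>y. y \<in> U \<Longrightarrow> deriv (\<lambda>x. f x + g x) y = deriv f y + deriv g y"
    by (rule DERIV_imp_deriv, rule DERIV_add; rule smooth_upto_DERIV) (use Suc.prems in auto)
  hence "(deriv ^^ i) (deriv (\<lambda>x. f x + g x)) x = (deriv ^^ i) (\<lambda>y. deriv f y + deriv g y) x"
    by (rule deriv_loc[OF assms(1)]) (use Suc.prems in auto)
  also have "\<dots> = (deriv ^^ i) (deriv f) x + (deriv ^^ i) (deriv g) x"
    by (rule Suc.IH) (use Suc.prems smooth_upto_deriv in auto)
  finally show ?case by (simp only: funpow_deriv_Suc)
qed

lemma smooth_on_add:
  assumes "open U" "smooth_on U f" "smooth_on U g"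
  shows "smooth_on U (\<lambda>x. f x + g x)"
  unfolding smooth_on_def
proof (intro allI ballI)
  fix i x assume x: "x \<in> U"
  have "(deriv ^^ i) f differentiable (at x)" "(deriv ^^ i) g differentiable (at x)"
    using assms x unfolding smooth_on_def by auto
  hence d: "(\<lambda>y. (deriv ^^ i) f y + (deriv ^^ i) g y) differentiable (at x)" by auto
  show "(deriv ^^ i) (\<lambda>x. f x + g x) differentiable (at x)"
    by (rule diff_loc[OF assms(1) _ x d]) (rule smooth_funpow_add[symmetric, OF assms(1) smooth_on_upto smooth_on_upto]; use assms in auto)
qed

lemma smooth_on_mult:
  assumes "open U" "smooth_on U f" "smooth_on U g"
  shows "smooth_on U (\<lambda>x. f x * g x)"
proof -
  have "\<forall>f g. smooth_on U f \<longrightarrow> smooth_on U g \<longrightarrow> (\<forall>j\<le>i. \<forall>x\<in>U. (deriv ^^ j) (\<lambda>x. f x * g x) differentiable (at x))" for i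
  proof (induction i)
    case 0
    then show ?case using smooth_on_diff by auto
  next
    case (Suc i)
    show ?case
    proof (intro allI impI ballI)
      fix f g j x assume f: "smooth_on U f" and g: "smooth_on U g" and j: "j \<le> Suc i" and x: "x \<in> U"
      show "(deriv ^^ j) (\<lambda>x. f x * g x) differentiable (at x)"
      proof (cases j)
        case 0 thus ?thesis using f g x smooth_on_diff by auto
      next
        case (Suc j')
        with j have j': "j' \<le> i" by simp
        have e: "\<And>y. y \<in> U \<Longrightarrow> deriv (\<lambda>x. f x * g x) y = deriv f y * g y + deriv g y * f y"
          by (rule DERIV_imp_deriv, rule DERIV_mult; rule smooth_on_DERIV) (use f g in auto)
        have fd: "smooth_on U (deriv f)" "smooth_on U (deriv g)" using f g smooth_on_deriv by auto
        have u1: "smooth_upto U j' (\<lambda>y. deriv f y * g y)" and u2: "smooth_upto U j' (\<lambda>y. deriv g y * f y)"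
          unfolding smooth_upto_def using Suc.IH fd f g j' by auto
        have d1: "(deriv ^^ j') (\<lambda>y. deriv f y * g y) differentiable (at x)"
          and d2: "(deriv ^^ j') (\<lambda>y. deriv g y * f y) differentiable (at x)"
          using Suc.IH fd f g j' x by auto
        have d12: "(\<lambda>y. (deriv ^^ j') (\<lambda>y. deriv f y * g y) y + (deriv ^^ j') (\<lambda>y. deriv g y * f y) y) differentiable (at x)"
          using d1 d2 by auto
        have "(deriv ^^ j') (\<lambda>y. deriv f y * g y + deriv g y * f y) differentiable (at x)"
          by (rule diff_loc[OF assms(1) _ x d12], rule smooth_funpow_add[symmetric, OF assms(1) u1 u2])
        hence "(deriv ^^ j') (deriv (\<lambda>x. f x * g x)) differentiable (at x)"
          by (rule deriv_funpow_loc_diff[OF assms(1) _ x, rotated]) (simp add: e)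
        thus ?thesis unfolding Suc by (simp only: funpow_deriv_Suc)
      qed
    qed
  qed
  thus ?thesis using assms unfolding smooth_on_def by blast
qed

lemma prod_order:
  assumes U: "open U" "x0 \<in> U" and su: "smooth_on U u" and sv: "smooth_on U v"
    and z: "\<forall>i<k. (deriv ^^ i) u x0 = 0"
  shows "(\<forall>i<k. (deriv ^^ i) (\<lambda>x. u x * v x) x0 = 0) \<and>
         (deriv ^^ k) (\<lambda>x. u x * v x) x0 = (deriv ^^ k) u x0 * v x0"
  using su sv z
proof (induction k arbitrary: u v)
  case 0 thus ?case by simp
next
  case (Suc k)
  have su': "smooth_on U (deriv u)" and sv': "smooth_on U (deriv v)"
    using Suc.prems smooth_on_deriv by auto
  have z1: "\<forall>i<k. (deriv ^^ i) (deriv u) x0 = 0"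
    using Suc.prems(3) by (metis Suc_mono funpow_deriv_Suc)
  have z2: "\<forall>i<k. (deriv ^^ i) u x0 = 0" using Suc.prems(3) by auto
  note A1 = Suc.IH[OF su' Suc.prems(2) z1]
  note A2 = Suc.IH[OF Suc.prems(1) sv' z2]
  have e: "\<And>y. y \<in> U \<Longrightarrow> deriv (\<lambda>x. u x * v x) y = deriv u y * v y + u y * deriv v y"
    by (rule DERIV_imp_deriv, rule DERIV_mult'[THEN DERIV_cong]; (rule smooth_on_DERIV)?) (use Suc.prems in auto)
  have p1: "smooth_on U (\<lambda>y. deriv u y * v y)" by (rule smooth_on_mult[OF U(1) su' Suc.prems(2)])
  have p2: "smooth_on U (\<lambda>y. u y * deriv v y)" by (rule smooth_on_mult[OF U(1) Suc.prems(1) sv'])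
  have D: "(deriv ^^ Suc i) (\<lambda>x. u x * v x) x0 =
      (deriv ^^ i) (\<lambda>y. deriv u y * v y) x0 + (deriv ^^ i) (\<lambda>y. u y * deriv v y) x0" for i
  proof -
    have "(deriv ^^ Suc i) (\<lambda>x. u x * v x) x0 = (deriv ^^ i) (\<lambda>y. deriv u y * v y + u y * deriv v y) x0"
      unfolding funpow_deriv_Suc by (rule deriv_loc[OF U(1) _ U(2)]) (simp add: e)
    also have "\<dots> = (deriv ^^ i) (\<lambda>y. deriv u y * v y) x0 + (deriv ^^ i) (\<lambda>y. u y * deriv v y) x0"
      by (rule smooth_funpow_add[OF U(1) smooth_on_upto[OF p1] smooth_on_upto[OF p2] U(2)])
    finally show ?thesis .
  qed
  have "(\<forall>i<Suc k. (deriv ^^ i) (\<lambda>x. u x * v x) x0 = 0)"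
  proof (intro allI impI)
    fix i assume i: "i < Suc k"
    show "(deriv ^^ i) (\<lambda>x. u x * v x) x0 = 0"
    proof (cases i)
      case 0
      have "u x0 = 0" using Suc.prems(3)[rule_format, of 0] by simp
      thus ?thesis using 0 by simp
    next
      case (Suc i') thus ?thesis using D[of i'] A1 A2 i by simp
    qed
  qed
  moreover have "(deriv ^^ Suc k) (\<lambda>x. u x * v x) x0 = (deriv ^^ Suc k) u x0 * v x0"
  proof -
    have X: "(deriv ^^ Suc k) (\<lambda>x. u x * v x) x0 = (deriv ^^ k) (deriv u) x0 * v x0"
      using D[of k] A1 A2 Suc.prems(3)[rule_format, of k] by (simp del: funpow.simps)
    show ?thesis unfolding X funpow_deriv_Suc[of k u] ..
  qed
  ultimately show ?case by blast
qed

lemma zero_mult_le_deriv: "zero_mult f x \<le> zero_mult (deriv f) x + 1"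
proof (cases "\<exists>k. (deriv ^^ k) (deriv f) x \<noteq> 0")
  case True
  then obtain k where k: "(deriv ^^ k) (deriv f) x \<noteq> 0" by blast
  let ?L = "LEAST k. (deriv ^^ k) (deriv f) x \<noteq> 0"
  have L: "(deriv ^^ ?L) (deriv f) x \<noteq> 0" by (rule LeastI[of _ k]) (rule k)
  hence L': "(deriv ^^ Suc ?L) f x \<noteq> 0" using funpow_deriv_Suc by metis
  hence ex: "\<exists>k. (deriv ^^ k) f x \<noteq> 0" by blast
  have "(LEAST k. (deriv ^^ k) f x \<noteq> 0) \<le> Suc ?L" by (rule Least_le) (rule L')
  thus ?thesis unfolding zero_mult_def using True ex by (simp add: one_enat_def)
next
  case False
  thus ?thesis unfolding zero_mult_def by simp
qed

lemma zero_mult_nonzero: "f x \<noteq> 0 \<Longrightarrow> zero_mult f x = 0"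
  unfolding zero_mult_def
  by (metis (mono_tags, lifting) Least_eq_0 funpow_0 zero_enat_def)

lemma zero_mult_zero: "f x = 0 \<Longrightarrow> zero_mult f x \<ge> 1"
proof (cases "\<exists>k. (deriv ^^ k) f x \<noteq> 0")
  case True
  assume f: "f x = 0"
  have "(LEAST k. (deriv ^^ k) f x \<noteq> 0) \<noteq> 0"
    using LeastI_ex[OF True] f by (metis funpow_0)
  thus ?thesis unfolding zero_mult_def using True by (simp add: one_enat_def)
next
  case False
  thus ?thesis unfolding zero_mult_def by simp
qed

lemma zero_mult_le: "(deriv ^^ k) f x \<noteq> 0 \<Longrightarrow> zero_mult f x \<le> enat k"
  unfolding zero_mult_def by (auto intro: Least_le)

lemma rolle_core:
  fixes f :: "real \<Rightarrow> real"
  assumes diff: "\<And>x. 0 < x \<Longrightarrow> f differentiable (at x)"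
  assumes "finite S"
  shows "S \<noteq> {} \<longrightarrow> S \<subseteq> {x. 0 < x \<and> f x = 0} \<longrightarrow>
    (\<exists>T. finite T \<and> T \<subseteq> {x. 0 < x \<and> deriv f x = 0} \<and> (\<forall>t\<in>T. t \<le> Max S) \<and> card S \<le> card T + 1 \<and>
       (\<Sum>x\<in>S. zero_mult f x) \<le> (\<Sum>x\<in>T. zero_mult (deriv f) x) + 1)"
  using assms(2)
proof (induction S rule: finite_linorder_max_induct)
  case empty then show ?case by simp
next
  case (insert b A)
  show ?case
  proof (intro impI)
    assume Sub: "insert b A \<subseteq> {x. 0 < x \<and> f x = 0}"
    define Tb where "Tb = (if deriv f b = 0 then {b} else {})"
    have Tbs: "Tb \<subseteq> {x. 0 < x \<and> deriv f x = 0}" "finite Tb" "\<forall>t\<in>Tb. t = b" using Sub by (auto simp: Tb_def)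
    have mb: "zero_mult f b \<le> (\<Sum>x\<in>Tb. zero_mult (deriv f) x) + 1"
      using zero_mult_le_deriv[of f b] zero_mult_nonzero[of "deriv f" b] by (auto simp: Tb_def)
    show "\<exists>T. finite T \<and> T \<subseteq> {x. 0 < x \<and> deriv f x = 0} \<and> (\<forall>t\<in>T. t \<le> Max (insert b A)) \<and>
        card (insert b A) \<le> card T + 1 \<and>
       (\<Sum>x\<in>insert b A. zero_mult f x) \<le> (\<Sum>x\<in>T. zero_mult (deriv f) x) + 1"
    proof (cases "A = {}")
      case True
      show ?thesis
        by (rule exI[of _ Tb]) (use Tbs mb True in auto)
    next
      case False
      from insert.IH False Sub obtain T0 where T0: "finite T0" "T0 \<subseteq> {x. 0 < x \<and> deriv f x = 0}"
        "\<forall>t\<in>T0. t \<le> Max A" "card A \<le> card T0 + 1"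
        "(\<Sum>x\<in>A. zero_mult f x) \<le> (\<Sum>x\<in>T0. zero_mult (deriv f) x) + 1" by auto
      define a where "a = Max A"
      have aA: "a \<in> A" using False insert.hyps(1) by (simp add: a_def)
      have ab: "a < b" using aA insert.hyps(2) by auto
      have bnA: "b \<notin> A" using insert.hyps(2) by auto
      have a0: "0 < a" "f a = 0" using aA Sub by auto
      have b0: "0 < b" "f b = 0" using Sub by auto
      have cont: "continuous_on {a..b} f"
        using diff a0 by (intro continuous_at_imp_continuous_on) (auto intro: differentiable_imp_continuous_within)
      have der: "\<And>x. a < x \<Longrightarrow> x < b \<Longrightarrow> (f has_derivative (*) (deriv f x)) (at x)"
        using diff a0 DERIV_deriv_iff_real_differentiable has_field_derivative_def
        by (metis order.strict_trans)
      obtain y where y: "a < y" "y < b" "(*) (deriv f y) = (\<lambda>v. 0)"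
        using Rolle_deriv[OF ab _ cont der] a0 b0 by auto
      have dy: "deriv f y = 0" using fun_cong[OF y(3), of 1] by simp
      define T where "T = T0 \<union> {y} \<union> Tb"
      have yT0: "y \<notin> T0" using T0(3) y a_def by force
      have disj: "(T0 \<union> {y}) \<inter> Tb = {}" using Tbs(3) T0(3) y ab a_def by force
      have fin: "finite T" using T0(1) Tbs(2) by (simp add: T_def)
      have sub: "T \<subseteq> {x. 0 < x \<and> deriv f x = 0}" using T0(2) Tbs(1) dy y a0 by (auto simp: T_def)
      have mx: "\<forall>t\<in>T. t \<le> Max (insert b A)"
      proof -
        have mA: "Max A < b" using aA a_def insert.hyps(2) by auto
        have "Max (insert b A) = max b (Max A)" using Max_insert[OF insert.hyps(1) False] .
        hence "Max (insert b A) = b" using mA by linarith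
        thus ?thesis using T0(3) Tbs(3) y ab a_def by (auto simp: T_def)
      qed
      have cardT: "card T = card T0 + 1 + card Tb"
        using card_Un_disjoint[OF _ Tbs(2) disj] yT0 T0(1) by (simp add: T_def)
      have card: "card (insert b A) \<le> card T + 1"
        using T0(4) cardT bnA insert.hyps(1) by simp
      have sumT: "(\<Sum>x\<in>T. zero_mult (deriv f) x) = (\<Sum>x\<in>T0. zero_mult (deriv f) x) + zero_mult (deriv f) y + (\<Sum>x\<in>Tb. zero_mult (deriv f) x)"
        using sum.union_disjoint[OF _ Tbs(2) disj] yT0 T0(1) by (simp add: T_def add.commute)
      have my: "1 \<le> zero_mult (deriv f) y" by (rule zero_mult_zero) (rule dy)
      have "(\<Sum>x\<in>insert b A. zero_mult f x) = zero_mult f b + (\<Sum>x\<in>A. zero_mult f x)"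
        using bnA insert.hyps(1) by simp
      also have "\<dots> \<le> ((\<Sum>x\<in>Tb. zero_mult (deriv f) x) + 1) + ((\<Sum>x\<in>T0. zero_mult (deriv f) x) + 1)"
        by (rule add_mono[OF mb T0(5)])
      also have "\<dots> = (\<Sum>x\<in>T0. zero_mult (deriv f) x) + 1 + (\<Sum>x\<in>Tb. zero_mult (deriv f) x) + 1"
        by (simp add: algebra_simps)
      also have "\<dots> \<le> (\<Sum>x\<in>T0. zero_mult (deriv f) x) + zero_mult (deriv f) y + (\<Sum>x\<in>Tb. zero_mult (deriv f) x) + 1"
        using my by (intro add_mono order.refl) 
      finally have "(\<Sum>x\<in>insert b A. zero_mult f x) \<le> (\<Sum>x\<in>T. zero_mult (deriv f) x) + 1"
        using sumT by simp
      thus ?thesis using fin sub mx card by blast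
    qed
  qed
qed

lemma zeros_set_eq: "{x \<in> {0<..}. f x = 0} = {x. 0 < x \<and> f x = 0}" by auto

lemma rolle_count:
  fixes f :: "real \<Rightarrow> real"
  assumes diff: "\<And>x. 0 < x \<Longrightarrow> f differentiable (at x)"
  shows "zeros_mult f {0<..} \<le> zeros_mult (deriv f) {0<..} + 1"
proof (cases "finite {x. 0 < x \<and> deriv f x = 0}")
  case False
  thus ?thesis unfolding zeros_mult_def zeros_set_eq by simp
next
  case fin': True
  let ?Z = "{x. 0 < x \<and> f x = 0}" and ?Z' = "{x. 0 < x \<and> deriv f x = 0}"
  have finZ: "finite ?Z"
  proof (rule ccontr)
    assume "infinite ?Z"
    then obtain S where S: "finite S" "card S = card ?Z' + 2" "S \<subseteq> ?Z"
      using infinite_arbitrarily_large by blast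
    have "S \<noteq> {}" using S(2) by auto
    then obtain T where T: "finite T" "T \<subseteq> ?Z'" "card S \<le> card T + 1"
      using rolle_core[OF diff S(1)] S(3) by blast
    have "card T \<le> card ?Z'" by (rule card_mono[OF fin' T(2)])
    thus False using T(3) S(2) by simp
  qed
  show ?thesis
  proof (cases "?Z = {}")
    case True
    show ?thesis unfolding zeros_mult_def zeros_set_eq True by simp
  next
    case False
    then obtain T where T: "finite T" "T \<subseteq> ?Z'"
      "(\<Sum>x\<in>?Z. zero_mult f x) \<le> (\<Sum>x\<in>T. zero_mult (deriv f) x) + 1"
      using rolle_core[OF diff finZ] by blast
    have "(\<Sum>x\<in>T. zero_mult (deriv f) x) \<le> (\<Sum>x\<in>?Z'. zero_mult (deriv f) x)"
      by (rule sum_mono2[OF fin' T(2)]) simp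
    hence "(\<Sum>x\<in>?Z. zero_mult f x) \<le> (\<Sum>x\<in>?Z'. zero_mult (deriv f) x) + 1"
      using T(3) by (meson add_right_mono order.trans)
    thus ?thesis unfolding zeros_mult_def zeros_set_eq using finZ fin' by simp
  qed
qed

lemma rolle_count_iter:
  fixes f :: "real \<Rightarrow> real"
  assumes diff: "\<And>j x. 0 < x \<Longrightarrow> (deriv ^^ j) f differentiable (at x)"
  shows "zeros_mult f {0<..} \<le> zeros_mult ((deriv ^^ j) f) {0<..} + enat j"
proof (induction j)
  case 0 thus ?case by (simp add: zero_enat_def[symmetric])
next
  case (Suc j)
  have "zeros_mult ((deriv ^^ j) f) {0<..} \<le> zeros_mult ((deriv ^^ Suc j) f) {0<..} + 1"
    using rolle_count[of "(deriv ^^ j) f"] diff by simp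
  hence "zeros_mult ((deriv ^^ j) f) {0<..} + enat j \<le> zeros_mult ((deriv ^^ Suc j) f) {0<..} + 1 + enat j"
    by (rule add_right_mono)
  also have "\<dots> = zeros_mult ((deriv ^^ Suc j) f) {0<..} + enat (Suc j)"
    by (simp add: one_enat_def add.assoc add.commute)
  finally show ?case using Suc.IH by (meson order.trans)
qed

lemma deriv_poly_funpow: "(deriv ^^ i) (\<lambda>x. poly p x) = (\<lambda>x. poly ((pderiv ^^ i) p) x)"
proof (induction i)
  case 0 thus ?case by simp
next
  case (Suc i)
  show ?case by (simp add: Suc.IH) (rule ext, rule DERIV_imp_deriv, rule poly_DERIV)
qed

lemma smooth_poly: "smooth_on U (\<lambda>x. poly p x)"
  unfolding smooth_on_def deriv_poly_funpow
  using poly_DERIV real_differentiable_def by blast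

lemma DERIV_poly_quot:
  fixes N D :: "real poly"
  assumes "poly D x \<noteq> 0"
  shows "DERIV (\<lambda>s. poly N s / poly D s ^ j) x :>
           poly (pderiv N * D - smult (of_nat j) (N * pderiv D)) x / poly D x ^ Suc j"
proof -
  have d: "DERIV (\<lambda>s. poly N s / poly D s ^ j) x :>
      (poly (pderiv N) x * poly D x ^ j - (of_nat j * (poly (pderiv D) x * poly D x ^ (j - Suc 0))) * poly N x) / ((poly D x ^ j) ^ Suc (Suc 0))"
    by (rule DERIV_quotient[OF poly_DERIV DERIV_power[OF poly_DERIV]]) (use assms in simp)
  have e: "(poly (pderiv N) x * poly D x ^ j - (of_nat j * (poly (pderiv D) x * poly D x ^ (j - Suc 0))) * poly N x) / ((poly D x ^ j) ^ Suc (Suc 0))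
     = poly (pderiv N * D - smult (of_nat j) (N * pderiv D)) x / poly D x ^ Suc j"
  proof (cases j)
    case 0 thus ?thesis using assms by (simp add: field_simps)
  next
    case (Suc j')
    thus ?thesis using assms by (simp add: field_simps power_Suc)
  qed
  show ?thesis by (rule DERIV_cong[OF d e])
qed

lemma smooth_quot:
  fixes N D :: "real poly"
  assumes U: "open U" and D: "\<And>x. x \<in> U \<Longrightarrow> poly D x \<noteq> 0"
  shows "smooth_on U (\<lambda>s. poly N s / poly D s ^ j)"
proof -
  have "\<forall>N j. \<forall>x\<in>U. (deriv ^^ i) (\<lambda>s. poly N s / poly D s ^ j) differentiable (at x)" for i
  proof (induction i)
    case 0
    show ?case using DERIV_poly_quot D real_differentiable_def by (simp) blast
  next
    case (Suc i)
    show ?case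
    proof (intro allI ballI)
      fix N :: "real poly" and j x assume x: "x \<in> U"
      let ?N' = "pderiv N * D - smult (of_nat j) (N * pderiv D)"
      have "(deriv ^^ i) (\<lambda>s. poly ?N' s / poly D s ^ Suc j) differentiable (at x)"
        using Suc x by blast
      hence "(deriv ^^ i) (deriv (\<lambda>s. poly N s / poly D s ^ j)) differentiable (at x)"
        by (rule deriv_funpow_loc_diff[OF U _ x, rotated])
           (rule DERIV_imp_deriv[OF DERIV_poly_quot, symmetric], rule D)
      thus "(deriv ^^ Suc i) (\<lambda>s. poly N s / poly D s ^ j) differentiable (at x)"
        by (simp only: funpow_deriv_Suc)
    qed
  qed
  thus ?thesis unfolding smooth_on_def by blast
qed

lemma deriv_pow_shift:
  fixes s0 :: real
  assumes "i \<le> k"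
  shows "(deriv ^^ i) (\<lambda>s. (s - s0) ^ k) = (\<lambda>s. of_nat (\<Prod>l<i. (k - l)) * (s - s0) ^ (k - i))"
  using assms
proof (induction i)
  case 0 thus ?case by simp
next
  case (Suc i)
  have IH: "(deriv ^^ i) (\<lambda>s. (s - s0) ^ k) = (\<lambda>s. of_nat (\<Prod>l<i. (k - l)) * (s - s0) ^ (k - i))"
    using Suc by simp
  have "deriv (\<lambda>s. of_nat (\<Prod>l<i. (k - l)) * (s - s0) ^ (k - i)) x =
        of_nat (\<Prod>l<Suc i. (k - l)) * (x - s0) ^ (k - Suc i)" for x
  proof (rule DERIV_imp_deriv)
    have "DERIV (\<lambda>s. of_nat (\<Prod>l<i. (k - l)) * (s - s0) ^ (k - i)) x :>
        of_nat (\<Prod>l<i. (k - l)) * (of_nat (k - i) * (x - s0) ^ (k - i - 1) * 1)"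
      by (intro derivative_eq_intros) auto
    moreover have "of_nat (\<Prod>l<i. (k - l)) * (of_nat (k - i) * (x - s0) ^ (k - i - 1) * 1) =
        (of_nat (\<Prod>l<Suc i. (k - l)) * (x - s0) ^ (k - Suc i) :: real)"
      by (simp add: mult.assoc)
    ultimately show "DERIV (\<lambda>s. of_nat (\<Prod>l<i. (k - l)) * (s - s0) ^ (k - i)) x :>
        of_nat (\<Prod>l<Suc i. (k - l)) * (x - s0) ^ (k - Suc i)" by (rule DERIV_cong)
  qed
  thus ?case by (simp add: IH)
qed

lemma deriv_pow_shift_at:
  fixes s0 :: real
  shows "(\<forall>i<k. (deriv ^^ i) (\<lambda>s. (s - s0) ^ k) s0 = 0) \<and> (deriv ^^ k) (\<lambda>s. (s - s0) ^ k) s0 \<noteq> 0"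
proof -
  have "(deriv ^^ i) (\<lambda>s. (s - s0) ^ k) s0 = 0" if "i < k" for i
    using deriv_pow_shift[of i k s0] that by simp
  moreover have "(\<Prod>l<k. (k - l)) \<noteq> 0" by simp
  hence "(deriv ^^ k) (\<lambda>s. (s - s0) ^ k) s0 \<noteq> 0"
    using deriv_pow_shift[of k k s0] by simp
  ultimately show ?thesis by blast
qed

lemma poly_times_count:
  fixes Q :: "real poly" and w :: "real \<Rightarrow> real"
  assumes Q: "Q \<noteq> 0" and w: "\<And>s. w s \<noteq> 0" and sw: "smooth_on UNIV w"
  shows "zeros_mult (\<lambda>s. poly Q s * w s) {0<..} \<le> enat (degree Q)"
proof -
  let ?g = "\<lambda>s. poly Q s * w s"
  let ?Z = "{x \<in> {0<..}. ?g x = 0}"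
  have Zsub: "?Z \<subseteq> {x. poly Q x = 0}" using w by auto
  have finR: "finite {x. poly Q x = 0}" by (rule poly_roots_finite[OF Q])
  have finZ: "finite ?Z" by (rule finite_subset[OF Zsub finR])
  have ord: "zero_mult ?g s0 \<le> enat (order s0 Q)" for s0
  proof -
    obtain q where q: "Q = [:- s0, 1:] ^ order s0 Q * q" "\<not> [:- s0, 1:] dvd q"
      using order_decomp[OF Q] by blast
    let ?k = "order s0 Q"
    have q0: "poly q s0 \<noteq> 0" using q(2) poly_eq_0_iff_dvd by blast
    have geq: "?g = (\<lambda>s. (s - s0) ^ ?k * (poly q s * w s))"
    proof
      fix s show "?g s = (s - s0) ^ ?k * (poly q s * w s)"
        by (subst q(1)) (simp add: poly_power mult.assoc)
    qed
    have su: "smooth_on UNIV (\<lambda>s. (s - s0) ^ ?k)"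
    proof -
      have "smooth_on UNIV (\<lambda>s. poly ([:- s0, 1:] ^ ?k) s)" by (rule smooth_poly)
      thus ?thesis by (simp add: poly_power)
    qed
    have sv: "smooth_on UNIV (\<lambda>s. poly q s * w s)"
      by (rule smooth_on_mult[OF open_UNIV smooth_poly sw])
    have P: "(deriv ^^ ?k) (\<lambda>s. (s - s0) ^ ?k * (poly q s * w s)) s0 =
             (deriv ^^ ?k) (\<lambda>s. (s - s0) ^ ?k) s0 * (poly q s0 * w s0)"
      using prod_order[OF open_UNIV _ su sv, of s0 ?k] deriv_pow_shift_at[of ?k s0] by simp
    have "(deriv ^^ ?k) ?g s0 \<noteq> 0"
      unfolding geq P using deriv_pow_shift_at[of ?k s0] q0 w by simp
    thus ?thesis by (rule zero_mult_le)
  qed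
  have "(\<Sum>x\<in>?Z. zero_mult ?g x) \<le> (\<Sum>x\<in>?Z. enat (order x Q))"
    by (rule sum_mono) (rule ord)
  also have "\<dots> = enat (\<Sum>x\<in>?Z. order x Q)" by (simp only: of_nat_eq_enat[symmetric] of_nat_sum)
  also have "(\<Sum>x\<in>?Z. order x Q) \<le> (\<Sum>x | poly Q x = 0. order x Q)"
    by (rule sum_mono2[OF finR Zsub]) simp
  also have "\<dots> \<le> degree Q" by (rule sum_order_le_degree[OF Q])
  finally show ?thesis unfolding zeros_mult_def using finZ by simp
qed

primrec Fseq :: "(real \<Rightarrow> real) \<Rightarrow> (real \<Rightarrow> real) \<Rightarrow> nat \<Rightarrow> real \<Rightarrow> real" where
  "Fseq G \<psi> 0 = G"
| "Fseq G \<psi> (Suc i) = (\<lambda>s. deriv (Fseq G \<psi> i) s * \<psi> s)"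

lemma smooth_on_subset: "smooth_on U f \<Longrightarrow> V \<subseteq> U \<Longrightarrow> smooth_on V f"
  unfolding smooth_on_def by blast

lemma Fseq_smooth:
  assumes "smooth_on {0<..} G" "smooth_on {0<..} \<psi>"
  shows "smooth_on {0<..} (Fseq G \<psi> i)"
  by (induction i) (auto intro!: smooth_on_mult smooth_on_deriv assms)

lemma zero_mult_enatD:
  assumes "zero_mult f x = enat k"
  shows "(deriv ^^ k) f x \<noteq> 0" "\<forall>i<k. (deriv ^^ i) f x = 0"
proof -
  have ex: "\<exists>k. (deriv ^^ k) f x \<noteq> 0" using assms unfolding zero_mult_def by (auto split: if_splits)
  hence k: "k = (LEAST k. (deriv ^^ k) f x \<noteq> 0)" using assms unfolding zero_mult_def by simp
  show "(deriv ^^ k) f x \<noteq> 0" unfolding k by (rule LeastI_ex[OF ex])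
  show "\<forall>i<k. (deriv ^^ i) f x = 0" unfolding k using not_less_Least by blast
qed

lemma compose_count:
  fixes G M \<sigma> \<psi> :: "real \<Rightarrow> real"
  assumes sG: "smooth_on {0<..} G" and s\<psi>: "smooth_on {0<..} \<psi>"
    and \<psi>0: "\<And>s. 0 < s \<Longrightarrow> \<psi> s \<noteq> 0"
    and \<sigma>pos: "\<And>h. 0 < h \<Longrightarrow> 0 < \<sigma> h"
    and \<sigma>inj: "inj_on \<sigma> {0<..}"
    and \<sigma>der: "\<And>h. 0 < h \<Longrightarrow> DERIV \<sigma> h :> \<psi> (\<sigma> h)"
    and MG: "\<And>h. 0 < h \<Longrightarrow> M h = G (\<sigma> h)"
    and B: "zeros_mult G {0<..} \<le> enat B"
  shows "zeros_mult M {0<..} \<le> enat B"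
proof -
  let ?F = "Fseq G \<psi>"
  have sF: "smooth_on {0<..} (?F i)" for i by (rule Fseq_smooth[OF sG s\<psi>])
  have MF: "\<forall>h>0. (deriv ^^ i) M h = ?F i (\<sigma> h)" for i
  proof (induction i)
    case 0 thus ?case using MG by simp
  next
    case (Suc i)
    show ?case
    proof (intro allI impI)
      fix h :: real assume h: "0 < h"
      have "(deriv ^^ Suc i) M h = deriv ((deriv ^^ i) M) h" by simp
      also have "\<dots> = deriv (\<lambda>h. ?F i (\<sigma> h)) h"
        by (rule deriv_loc1[of "{0<..}"]) (use Suc.IH h in auto)
      also have "\<dots> = deriv (?F i) (\<sigma> h) * \<psi> (\<sigma> h)"
        by (rule DERIV_imp_deriv, rule DERIV_chain2[OF smooth_on_DERIV[OF sF] \<sigma>der]) (use h \<sigma>pos in auto)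
      finally show "(deriv ^^ Suc i) M h = ?F (Suc i) (\<sigma> h)" by simp
    qed
  qed
  have transfer: "zero_mult M h \<le> zero_mult G (\<sigma> h)" if h: "0 < h" and fin: "zero_mult G (\<sigma> h) \<noteq> \<infinity>" for h
  proof -
    obtain k where k: "zero_mult G (\<sigma> h) = enat k" using fin by auto
    note kd = zero_mult_enatD[OF k]
    let ?s = "\<sigma> h"
    have s0: "0 < ?s" using \<sigma>pos h by auto
    have "\<forall>i\<le>k. (\<forall>l<k - i. (deriv ^^ l) (?F i) ?s = 0) \<and> (deriv ^^ (k - i)) (?F i) ?s \<noteq> 0"
    proof (intro allI)
      fix i show "i \<le> k \<longrightarrow> (\<forall>l<k - i. (deriv ^^ l) (?F i) ?s = 0) \<and> (deriv ^^ (k - i)) (?F i) ?s \<noteq> 0"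
      proof (induction i)
        case 0 thus ?case using kd by simp
      next
        case (Suc i)
        show ?case
        proof
          assume i: "Suc i \<le> k"
          with Suc.IH have IH: "\<forall>l<k - i. (deriv ^^ l) (?F i) ?s = 0" "(deriv ^^ (k - i)) (?F i) ?s \<noteq> 0" by auto
          have ksuc: "k - i = Suc (k - Suc i)" using i by simp
          have z: "\<forall>l<k - Suc i. (deriv ^^ l) (deriv (?F i)) ?s = 0"
            using IH(1) by (metis Suc_less_eq funpow_deriv_Suc ksuc)
          have nz: "(deriv ^^ (k - Suc i)) (deriv (?F i)) ?s \<noteq> 0"
            using IH(2) by (metis funpow_deriv_Suc ksuc)
          have s0': "?s \<in> {0<..}" using s0 by simp
          note P = prod_order[OF open_greaterThan s0' smooth_on_deriv[OF sF] s\<psi> z]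
          show "(\<forall>l<k - Suc i. (deriv ^^ l) (?F (Suc i)) ?s = 0) \<and> (deriv ^^ (k - Suc i)) (?F (Suc i)) ?s \<noteq> 0"
            using P s0 nz \<psi>0[OF s0] by simp
        qed
      qed
    qed
    hence "?F k ?s \<noteq> 0" by auto
    hence "(deriv ^^ k) M h \<noteq> 0" using MF h by simp
    hence "zero_mult M h \<le> enat k" by (rule zero_mult_le)
    thus ?thesis using k by simp
  qed
  let ?ZM = "{x \<in> {0<..}. M x = 0}" and ?ZG = "{x \<in> {0<..}. G x = 0}"
  have finG: "finite ?ZG" using B unfolding zeros_mult_def by (auto split: if_splits)
  have sumG: "(\<Sum>x\<in>?ZG. zero_mult G x) \<le> enat B" using B finG unfolding zeros_mult_def by simp
  have fm: "zero_mult G s \<noteq> \<infinity>" if "s \<in> ?ZG" for s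
  proof -
    have "zero_mult G s \<le> (\<Sum>x\<in>?ZG. zero_mult G x)" by (rule member_le_sum[OF that _ finG]) simp
    thus ?thesis using sumG by (metis enat_ord_simps(5) enat_ord_simps(3) order.trans infinity_ileE)
  qed
  have img: "\<sigma> ` ?ZM \<subseteq> ?ZG" using MG \<sigma>pos by auto
  have injM: "inj_on \<sigma> ?ZM" using \<sigma>inj by (rule inj_on_subset) auto
  have finM: "finite ?ZM" using finite_imageD[OF finite_subset[OF img finG] injM] .
  have "(\<Sum>x\<in>?ZM. zero_mult M x) \<le> (\<Sum>x\<in>?ZM. zero_mult G (\<sigma> x))"
    by (rule sum_mono) (use transfer fm img in auto)
  also have "\<dots> = (\<Sum>x\<in>\<sigma> ` ?ZM. zero_mult G x)" using sum.reindex[OF injM, of "zero_mult G"] by (simp add: comp_def)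
  also have "\<dots> \<le> (\<Sum>x\<in>?ZG. zero_mult G x)" by (rule sum_mono2[OF finG img]) simp
  also have "\<dots> \<le> enat B" by (rule sumG)
  finally show ?thesis unfolding zeros_mult_def using finM by simp
qed

lemma degree_pderiv_funpow: "degree ((pderiv ^^ j) (p :: real poly)) = degree p - j"
  by (induction j) (simp_all add: degree_pderiv)

lemma pderiv_funpow_zero: "degree (p :: real poly) < j \<Longrightarrow> (pderiv ^^ j) p = 0"
proof (induction j)
  case 0 thus ?case by simp
next
  case (Suc j)
  show ?case
  proof (cases "degree p < j")
    case True thus ?thesis using Suc.IH by (simp add: pderiv_0)
  next
    case False
    hence "degree ((pderiv ^^ j) p) = 0" using degree_pderiv_funpow[of j p] Suc.prems by simp
    thus ?thesis by (simp add: pderiv_eq_0_iff)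
  qed
qed

primrec Nq :: "real poly \<Rightarrow> real poly \<Rightarrow> real poly \<Rightarrow> nat \<Rightarrow> real poly" where
  "Nq R K E 0 = 0"
| "Nq R K E (Suc j) = (pderiv ^^ j) R * K * E ^ j + pderiv (Nq R K E j) * E - smult (of_nat j) (Nq R K E j * pderiv E)"

lemma degree_Nq:
  assumes "degree R \<le> d" "degree K \<le> mk" "degree E \<le> e"
  shows "degree (Nq R K E j) \<le> d + (mk + e) * j"
proof (induction j)
  case 0 thus ?case by simp
next
  case (Suc j)
  let ?N = "Nq R K E j"
  have a: "degree ((pderiv ^^ j) R * K * E ^ j) \<le> d + (mk + e) * Suc j"
  proof -
    have "degree ((pderiv ^^ j) R * K * E ^ j) \<le> degree ((pderiv ^^ j) R) + degree K + degree E * j"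
      by (meson add_mono degree_mult_le degree_power_le order.trans)
    also have "\<dots> \<le> d + mk + e * j"
      using assms degree_pderiv_funpow[of j R] by (intro add_mono mult_right_mono) auto
    also have "\<dots> \<le> d + (mk + e) * Suc j" by (simp add: algebra_simps)
    finally show ?thesis .
  qed
  have b: "degree (pderiv ?N * E) \<le> d + (mk + e) * Suc j"
  proof -
    have "degree (pderiv ?N * E) \<le> degree (pderiv ?N) + degree E" by (rule degree_mult_le)
    also have "\<dots> \<le> d + (mk + e) * j + e" using Suc.IH assms degree_pderiv[of ?N] by (intro add_mono) auto
    also have "\<dots> \<le> d + (mk + e) * Suc j" by (simp add: algebra_simps)
    finally show ?thesis .
  qed
  have c: "degree (smult (of_nat j) (?N * pderiv E)) \<le> d + (mk + e) * Suc j"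
  proof -
    have "degree (smult (of_nat j) (?N * pderiv E)) \<le> degree ?N + degree (pderiv E)"
      by (meson degree_mult_le degree_smult_le order.trans)
    also have "\<dots> \<le> d + (mk + e) * j + e" using Suc.IH assms degree_pderiv[of E] by (intro add_mono) auto
    also have "\<dots> \<le> d + (mk + e) * Suc j" by (simp add: algebra_simps)
    finally show ?thesis .
  qed
  show ?case by (simp only: Nq.simps) (intro degree_diff_le degree_add_le a b c)
qed

lemma deriv_G_formula:
  fixes P R K E :: "real poly" and \<Theta> :: "real \<Rightarrow> real"
  assumes E: "\<And>s. poly E s \<noteq> 0" and \<Theta>: "\<And>s. DERIV \<Theta> s :> poly K s / poly E s"
  shows "(deriv ^^ j) (\<lambda>s. poly P s + poly R s * \<Theta> s) =
     (\<lambda>s. poly ((pderiv ^^ j) P) s + poly ((pderiv ^^ j) R) s * \<Theta> s + poly (Nq R K E j) s / poly E s ^ j)"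
proof (induction j)
  case 0 thus ?case by simp
next
  case (Suc j)
  show ?case
  proof (simp only: funpow.simps(2) comp_def Suc.IH, rule ext, rule DERIV_imp_deriv)
    fix s
    let ?Rj = "(pderiv ^^ j) R" and ?N = "Nq R K E j"
    have d: "DERIV (\<lambda>s. poly ((pderiv ^^ j) P) s + poly ?Rj s * \<Theta> s + poly ?N s / poly E s ^ j) s :>
      poly (pderiv ((pderiv ^^ j) P)) s + (poly ?Rj s * (poly K s / poly E s) + poly (pderiv ?Rj) s * \<Theta> s)
        + poly (pderiv ?N * E - smult (of_nat j) (?N * pderiv E)) s / poly E s ^ Suc j"
      by (intro DERIV_add DERIV_mult' poly_DERIV \<Theta> DERIV_poly_quot E)
    have eq: "poly ?Rj s * (poly K s / poly E s) = poly (?Rj * K * E ^ j) s / poly E s ^ Suc j"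
      using E[of s] by (simp add: field_simps)
    show "DERIV (\<lambda>s. poly ((pderiv ^^ j) P) s + poly ?Rj s * \<Theta> s + poly ?N s / poly E s ^ j) s :>
      poly (pderiv ((pderiv ^^ j) P)) s + poly (pderiv ((pderiv ^^ j) R)) s * \<Theta> s + poly (Nq R K E (Suc j)) s / poly E s ^ Suc j"
    proof (rule DERIV_cong[OF d])
      have q: "poly (Nq R K E (Suc j)) s / poly E s ^ Suc j = poly (?Rj * K * E ^ j) s / poly E s ^ Suc j
          + poly (pderiv ?N * E - smult (of_nat j) (?N * pderiv E)) s / poly E s ^ Suc j"
        by (simp only: Nq.simps poly_add poly_diff add_divide_distrib diff_divide_distrib)
      show "poly (pderiv ((pderiv ^^ j) P)) s + (poly ?Rj s * (poly K s / poly E s) + poly (pderiv ?Rj) s * \<Theta> s)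
        + poly (pderiv ?N * E - smult (of_nat j) (?N * pderiv E)) s / poly E s ^ Suc j =
        poly (pderiv ((pderiv ^^ j) P)) s + poly (pderiv ((pderiv ^^ j) R)) s * \<Theta> s + poly (Nq R K E (Suc j)) s / poly E s ^ Suc j"
        unfolding q eq by simp
    qed
  qed
qed

lemma G_count:
  fixes P R K E :: "real poly" and \<Theta> :: "real \<Rightarrow> real"
  assumes E: "\<And>s. poly E s \<noteq> 0" and \<Theta>: "\<And>s. DERIV \<Theta> s :> poly K s / poly E s"
    and dP: "degree P \<le> d" and dR: "degree R \<le> d" and dK: "degree K \<le> mk" and dE: "degree E \<le> e"
    and nz: "\<exists>s>0. poly P s + poly R s * \<Theta> s \<noteq> 0"
  shows "smooth_on UNIV (\<lambda>s. poly P s + poly R s * \<Theta> s) \<and>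
         zeros_mult (\<lambda>s. poly P s + poly R s * \<Theta> s) {0<..} \<le> enat (2 * d + 1 + (mk + e) * (d + 1))"
proof -
  define G where "G = (\<lambda>s. poly P s + poly R s * \<Theta> s)"
  note DG = deriv_G_formula[OF E \<Theta>, of _ P R, folded G_def]
  have diff: "(deriv ^^ j) G differentiable (at x)" for j x
  proof -
    have "DERIV ((deriv ^^ j) G) x :> poly (pderiv ((pderiv ^^ j) P)) x
        + (poly ((pderiv ^^ j) R) x * (poly K x / poly E x) + poly (pderiv ((pderiv ^^ j) R)) x * \<Theta> x)
        + poly (pderiv (Nq R K E j) * E - smult (of_nat j) (Nq R K E j * pderiv E)) x / poly E x ^ Suc j"
      unfolding DG by (intro DERIV_add DERIV_mult' poly_DERIV \<Theta> DERIV_poly_quot E)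
    thus ?thesis using real_differentiable_def by blast
  qed
  have smooth: "smooth_on UNIV G" unfolding smooth_on_def using diff by blast
  let ?N = "Suc d"
  let ?Q = "Nq R K E ?N"
  have iter: "zeros_mult G {0<..} \<le> zeros_mult ((deriv ^^ ?N) G) {0<..} + enat ?N"
    by (rule rolle_count_iter) (rule diff)
  have GN: "(deriv ^^ ?N) G = (\<lambda>s. poly ?Q s / poly E s ^ ?N)"
    unfolding DG using pderiv_funpow_zero[of P ?N] pderiv_funpow_zero[of R ?N] dP dR by simp
  have dQ: "degree ?Q \<le> d + (mk + e) * ?N" by (rule degree_Nq[OF dR dK dE])
  have "zeros_mult G {0<..} \<le> enat (2 * d + 1 + (mk + e) * (d + 1))"
  proof (cases "?Q = 0")
    case False
    define w where "w = (\<lambda>s. poly 1 s / poly E s ^ ?N)"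
    have w0: "w s \<noteq> 0" for s using E by (simp add: w_def)
    have sw: "smooth_on UNIV w" unfolding w_def by (rule smooth_quot) (use E in auto)
    have "(deriv ^^ ?N) G = (\<lambda>s. poly ?Q s * w s)" unfolding GN w_def by simp
    hence "zeros_mult ((deriv ^^ ?N) G) {0<..} \<le> enat (degree ?Q)"
      using poly_times_count[OF False w0 sw] by simp
    hence "zeros_mult G {0<..} \<le> enat (degree ?Q) + enat ?N"
      using iter by (meson add_right_mono order.trans)
    also have "\<dots> \<le> enat (2 * d + 1 + (mk + e) * (d + 1))" using dQ by simp
    finally show ?thesis .
  next
    case True
    define J where "J = {j. j \<le> ?N \<and> (\<exists>s>0. (deriv ^^ j) G s \<noteq> 0)}"
    have finJ: "finite J" unfolding J_def by simp
    have J0: "0 \<in> J" using nz unfolding J_def G_def by simp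
    define j0 where "j0 = Max J"
    have j0J: "j0 \<in> J" unfolding j0_def using finJ J0 Max_in by blast
    have NJ: "?N \<notin> J"
    proof -
      have "\<forall>s. (deriv ^^ ?N) G s = 0" unfolding GN True by simp
      thus ?thesis unfolding J_def by (simp del: funpow.simps)
    qed
    have j0N: "j0 < ?N" using j0J NJ unfolding J_def by (cases "j0 = ?N") auto
    have sj: "Suc j0 \<notin> J" using Max_ge[OF finJ, of "Suc j0"] unfolding j0_def[symmetric] by auto
    have z: "\<forall>s>0. (deriv ^^ Suc j0) G s = 0" using sj j0N unfolding J_def by auto
    obtain s1 where s1: "0 < s1" "(deriv ^^ j0) G s1 \<noteq> 0" using j0J unfolding J_def by auto
    have const: "(deriv ^^ j0) G x = (deriv ^^ j0) G s1" if x: "0 < x" for x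
    proof (rule DERIV_isconst3[where a="min x s1 / 2" and b="max x s1 + 1" and f="(deriv ^^ j0) G"])
      show "min x s1 / 2 < max x s1 + 1" using x s1 by (simp add: min_def max_def)
      show "x \<in> {min x s1 / 2<..<max x s1 + 1}" using x s1 by (auto simp: min_def max_def)
      show "s1 \<in> {min x s1 / 2<..<max x s1 + 1}" using x s1 by (auto simp: min_def max_def)
      fix y assume y: "y \<in> {min x s1 / 2<..<max x s1 + 1}"
      hence y0: "0 < y" using x s1 by (auto simp: min_def split: if_splits)
      have "DERIV ((deriv ^^ j0) G) y :> deriv ((deriv ^^ j0) G) y"
        using diff DERIV_deriv_iff_real_differentiable by blast
      moreover have "deriv ((deriv ^^ j0) G) y = 0" using z y0 by simp
      ultimately show "DERIV ((deriv ^^ j0) G) y :> 0" by simp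
    qed
    have nz0: "(deriv ^^ j0) G x \<noteq> 0" if "0 < x" for x using const[OF that] s1(2) by simp
    have "{x \<in> {0<..}. (deriv ^^ j0) G x = 0} = {}" using nz0 by auto
    hence "zeros_mult ((deriv ^^ j0) G) {0<..} = 0" unfolding zeros_mult_def by (simp only: finite.emptyI if_True sum.empty)
    hence "zeros_mult G {0<..} \<le> enat j0"
      using rolle_count_iter[of G j0] diff by simp
    also have "\<dots> \<le> enat (2 * d + 1 + (mk + e) * (d + 1))" using j0N by simp
    finally show ?thesis .
  qed
  thus ?thesis using smooth unfolding G_def by blast
qed

inductive TP :: "nat \<Rightarrow> (real \<Rightarrow> real) \<Rightarrow> bool" for d where
  TP0: "TP d (\<lambda>t. 0)"
| TPm: "a + b \<le> d \<Longrightarrow> even (a + b + d) \<Longrightarrow> TP d (\<lambda>t. c * cos t ^ a * sin t ^ b)"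
| TPadd: "TP d f \<Longrightarrow> TP d g \<Longrightarrow> TP d (\<lambda>t. f t + g t)"

lemma TP_scale: "TP d f \<Longrightarrow> TP d (\<lambda>t. c * f t)"
proof (induction rule: TP.induct)
  case TP0 thus ?case using TP.TP0 by simp
next
  case (TPm a b c')
  have "TP d (\<lambda>t. (c * c') * cos t ^ a * sin t ^ b)" by (rule TP.TPm[OF TPm])
  thus ?case by (simp add: mult.assoc)
next
  case (TPadd f g)
  have "TP d (\<lambda>t. c * f t + c * g t)" by (rule TP.TPadd[OF TPadd.IH])
  thus ?case by (simp add: distrib_left)
qed

lemma TP_mono: "TP e f \<Longrightarrow> e \<le> d \<Longrightarrow> even (e + d) \<Longrightarrow> TP d f"
proof (induction rule: TP.induct)
  case TP0 show ?case by (rule TP.TP0)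
next
  case (TPm a b c)
  show ?case by (rule TP.TPm) (use TPm in auto)
next
  case (TPadd f g) thus ?case using TP.TPadd by blast
qed

lemma TP_mono1: "TP d (\<lambda>t. c * cos t ^ a * sin t ^ b) \<Longrightarrow> TP d (\<lambda>t. cos t ^ a * sin t ^ b * c)"
  by (simp add: mult.commute mult.left_commute)

lemma aux_field: "(A::real) \<noteq> 0 \<Longrightarrow> (- inverse A) * (B * Y - A * X) + (B / A) * (Y - c) = X - (B / A) * c"
  by (simp add: field_simps)

lemma mono_AD:
  "a + b \<le> d \<Longrightarrow> even (a + b + d) \<Longrightarrow>
   \<exists>c0 g. TP d g \<and> (odd d \<longrightarrow> c0 = 0) \<and> (\<forall>t. DERIV g t :> cos t ^ a * sin t ^ b - c0)"
proof (induction "a + b" arbitrary: a b rule: less_induct)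
  case less
  show ?case
  proof (cases b)
    case 0
    show ?thesis
    proof (cases a)
      case 0
      have "TP d (\<lambda>t. 0)" by (rule TP.TP0)
      moreover have "odd d \<longrightarrow> (1::real) = 0" using less.prems \<open>b = 0\<close> 0 by simp
      ultimately show ?thesis using \<open>b = 0\<close> 0 by (intro exI[of _ 1] exI[of _ "\<lambda>t. 0"]) auto
    next
      case (Suc a1)
      show ?thesis
      proof (cases a1)
        case 0
        have "TP d (\<lambda>t. 1 * cos t ^ 0 * sin t ^ 1)" by (rule TP.TPm) (use less.prems \<open>b = 0\<close> Suc 0 in auto)
        hence "TP d (\<lambda>t. sin t)" by simp
        moreover have "\<forall>t. DERIV sin t :> cos t ^ a * sin t ^ b - 0"
          using \<open>b = 0\<close> Suc 0 by (auto intro!: derivative_eq_intros)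
        ultimately show ?thesis by blast
      next
        case (Suc a2)
        have aa: "a = a2 + 2" using \<open>a = Suc a1\<close> Suc by simp
        obtain c0 g where IH: "TP d g" "odd d \<longrightarrow> c0 = 0" "\<forall>t. DERIV g t :> cos t ^ a2 * sin t ^ 0 - c0"
          using less.hyps[of a2 0] less.prems \<open>b = 0\<close> aa by auto
        have g1: "TP d (\<lambda>t. 1 * cos t ^ (a2 + 1) * sin t ^ 1)" by (rule TP.TPm) (use less.prems \<open>b = 0\<close> aa in auto)
        define G where "G = (\<lambda>t. inverse (real a) * (1 * cos t ^ (a2 + 1) * sin t ^ 1) + (real (a - 1) / real a) * g t)"
        have TG: "TP d G" unfolding G_def by (intro TP.TPadd TP_scale g1 IH(1))
        have DG: "DERIV G t :> cos t ^ a * sin t ^ b - (real (a - 1) / real a) * c0" for t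
        proof -
          have d1: "DERIV (\<lambda>t. 1 * cos t ^ (a2 + 1) * sin t ^ 1) t :>
              cos t ^ (a2 + 1) * cos t - real (a2 + 1) * cos t ^ a2 * sin t * sin t"
            by (rule DERIV_cong, (rule derivative_eq_intros refl)+) (simp add: algebra_simps)
          have e: "cos t ^ (a2 + 1) * cos t - real (a2 + 1) * cos t ^ a2 * sin t * sin t
               = real a * cos t ^ a - real (a - 1) * cos t ^ a2"
          proof -
            have c: "sin t * sin t = 1 - cos t * cos t" using sin_cos_squared_add[of t] by (simp add: power2_eq_square algebra_simps)
            have "cos t ^ (a2 + 1) * cos t - real (a2 + 1) * cos t ^ a2 * sin t * sin t
                = cos t ^ a2 * (cos t * cos t) - real (a2 + 1) * cos t ^ a2 * (sin t * sin t)"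
              by (simp add: power_add algebra_simps)
            also have "\<dots> = cos t ^ a2 * (cos t * cos t) - real (a2 + 1) * cos t ^ a2 * (1 - cos t * cos t)"
              unfolding c ..
            also have "\<dots> = real a * cos t ^ a - real (a - 1) * cos t ^ a2"
              unfolding aa by (simp add: power_add algebra_simps)
            finally show ?thesis .
          qed
          have "DERIV G t :> inverse (real a) * (real a * cos t ^ a - real (a - 1) * cos t ^ a2)
                + (real (a - 1) / real a) * (cos t ^ a2 * sin t ^ 0 - c0)"
            unfolding G_def by (intro DERIV_add DERIV_cmult d1[unfolded e] IH(3)[rule_format])
          moreover have "inverse (real a) * (real a * cos t ^ a - real (a - 1) * cos t ^ a2)
                + (real (a - 1) / real a) * (cos t ^ a2 * sin t ^ 0 - c0) = cos t ^ a * sin t ^ b - (real (a - 1) / real a) * c0"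
          proof -
            have a0: "real a \<noteq> 0" using aa by simp
            show ?thesis using a0 \<open>b = 0\<close> by (simp add: field_simps)
          qed
          ultimately show ?thesis by simp
        qed
        show ?thesis using TG DG IH(2) by (intro exI[of _ "(real (a - 1) / real a) * c0"] exI[of _ G]) auto
      qed
    qed
  next
    case (Suc b1)
    show ?thesis
    proof (cases b1)
      case 0
      have "TP d (\<lambda>t. (- inverse (real (a + 1))) * cos t ^ (a + 1) * sin t ^ 0)" by (rule TP.TPm) (use less.prems Suc 0 in auto)
      moreover have "\<forall>t. DERIV (\<lambda>t. (- inverse (real (a + 1))) * cos t ^ (a + 1) * sin t ^ 0) t :> cos t ^ a * sin t ^ b - 0"
      proof
        fix t
        show "DERIV (\<lambda>t. (- inverse (real (a + 1))) * cos t ^ (a + 1) * sin t ^ 0) t :> cos t ^ a * sin t ^ b - 0"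
          by (rule DERIV_cong, (rule derivative_eq_intros refl)+) (use Suc 0 in \<open>simp add: field_simps\<close>)
      qed
      ultimately show ?thesis by blast
    next
      case (Suc b2)
      have bb: "b = b2 + 2" using \<open>b = Suc b1\<close> Suc by simp
      obtain c0 g where IH: "TP d g" "odd d \<longrightarrow> c0 = 0" "\<forall>t. DERIV g t :> cos t ^ a * sin t ^ b2 - c0"
        using less.hyps[of a b2] less.prems bb by auto
      have g1: "TP d (\<lambda>t. 1 * cos t ^ (a + 1) * sin t ^ (b2 + 1))" by (rule TP.TPm) (use less.prems bb in auto)
      define G where "G = (\<lambda>t. (- inverse (real (a + b))) * (1 * cos t ^ (a + 1) * sin t ^ (b2 + 1)) + (real (b2 + 1) / real (a + b)) * g t)"
      have TG: "TP d G" unfolding G_def by (intro TP.TPadd TP_scale g1 IH(1))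
      have DG: "DERIV G t :> cos t ^ a * sin t ^ b - (real (b2 + 1) / real (a + b)) * c0" for t
      proof -
        have d1: "DERIV (\<lambda>t. 1 * cos t ^ (a + 1) * sin t ^ (b2 + 1)) t :>
            real (b2 + 1) * cos t ^ (a + 1) * sin t ^ b2 * cos t - real (a + 1) * cos t ^ a * sin t * sin t ^ (b2 + 1)"
          by (rule DERIV_cong, (rule derivative_eq_intros refl)+) (simp add: algebra_simps)
        have e: "real (b2 + 1) * cos t ^ (a + 1) * sin t ^ b2 * cos t - real (a + 1) * cos t ^ a * sin t * sin t ^ (b2 + 1)
             = real (b2 + 1) * (cos t ^ a * sin t ^ b2) - real (a + b) * (cos t ^ a * sin t ^ b)"
        proof -
          have c2: "cos t * cos t = 1 - sin t * sin t" using sin_cos_squared_add[of t] by (simp add: power2_eq_square algebra_simps)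
          have "real (b2 + 1) * cos t ^ (a + 1) * sin t ^ b2 * cos t = real (b2 + 1) * (cos t ^ a * sin t ^ b2) * (cos t * cos t)"
            by (simp add: power_add algebra_simps)
          also have "\<dots> = real (b2 + 1) * (cos t ^ a * sin t ^ b2) - real (b2 + 1) * (cos t ^ a * sin t ^ b)"
            unfolding c2 bb by (simp add: power_add power2_eq_square algebra_simps)
          finally have x: "real (b2 + 1) * cos t ^ (a + 1) * sin t ^ b2 * cos t = real (b2 + 1) * (cos t ^ a * sin t ^ b2) - real (b2 + 1) * (cos t ^ a * sin t ^ b)" .
          have y: "real (a + 1) * cos t ^ a * sin t * sin t ^ (b2 + 1) = real (a + 1) * (cos t ^ a * sin t ^ b)"
            unfolding bb by (simp add: power_add power2_eq_square algebra_simps)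
          show ?thesis unfolding x y bb by (simp add: algebra_simps)
        qed
        have "DERIV G t :> (- inverse (real (a + b))) * (real (b2 + 1) * (cos t ^ a * sin t ^ b2) - real (a + b) * (cos t ^ a * sin t ^ b))
              + (real (b2 + 1) / real (a + b)) * (cos t ^ a * sin t ^ b2 - c0)"
          unfolding G_def by (intro DERIV_add DERIV_cmult d1[unfolded e] IH(3)[rule_format])
        moreover have "(- inverse (real (a + b))) * (real (b2 + 1) * (cos t ^ a * sin t ^ b2) - real (a + b) * (cos t ^ a * sin t ^ b))
              + (real (b2 + 1) / real (a + b)) * (cos t ^ a * sin t ^ b2 - c0) = cos t ^ a * sin t ^ b - (real (b2 + 1) / real (a + b)) * c0"
        proof -
          have a0: "real (a + b) \<noteq> 0" using bb by simp
          show ?thesis by (rule aux_field[OF a0])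
        qed
        ultimately show ?thesis by simp
      qed
      show ?thesis using TG DG IH(2) by (intro exI[of _ "(real (b2 + 1) / real (a + b)) * c0"] exI[of _ G]) auto
    qed
  qed
qed

lemma TP_AD:
  "TP d f \<Longrightarrow> \<exists>c0 g. TP d g \<and> (odd d \<longrightarrow> c0 = 0) \<and> (\<forall>t. DERIV g t :> f t - c0)"
proof (induction rule: TP.induct)
  case TP0
  show ?case by (intro exI[of _ 0] exI[of _ "\<lambda>t. 0"]) (auto intro: TP.TP0)
next
  case (TPm a b c)
  obtain c0 g where g: "TP d g" "odd d \<longrightarrow> c0 = 0" "\<forall>t. DERIV g t :> cos t ^ a * sin t ^ b - c0"
    using mono_AD[OF TPm] by blast
  have "DERIV (\<lambda>t. c * g t) t :> c * cos t ^ a * sin t ^ b - c * c0" for t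
    using DERIV_cmult[OF g(3)[rule_format, of t], of c] by (simp add: algebra_simps)
  thus ?case using g TP_scale by (intro exI[of _ "c * c0"] exI[of _ "\<lambda>t. c * g t"]) auto
next
  case (TPadd f g)
  obtain c1 g1 where 1: "TP d g1" "odd d \<longrightarrow> c1 = 0" "\<forall>t. DERIV g1 t :> f t - c1" using TPadd.IH(1) by blast
  obtain c2 g2 where 2: "TP d g2" "odd d \<longrightarrow> c2 = 0" "\<forall>t. DERIV g2 t :> g t - c2" using TPadd.IH(2) by blast
  have "DERIV (\<lambda>t. g1 t + g2 t) t :> f t + g t - (c1 + c2)" for t
    using DERIV_add[OF 1(3)[rule_format, of t] 2(3)[rule_format, of t]] by (simp add: algebra_simps)
  thus ?case using 1 2 TP.TPadd by (intro exI[of _ "c1 + c2"] exI[of _ "\<lambda>t. g1 t + g2 t"]) auto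
qed

lemma TP_periodic: "TP d g \<Longrightarrow> g (x - 2 * pi) = g x"
  by (induction rule: TP.induct) (auto simp: cos_diff sin_diff)

lemma TP_eval:
  fixes X Y H :: "real poly" and r \<theta> :: "real \<Rightarrow> real"
  assumes "TP k g"
    and geo: "\<And>s. s \<in> S \<Longrightarrow> r s * cos (\<theta> s) = poly X s \<and> r s * sin (\<theta> s) = poly Y s \<and> (r s)^2 = poly H s"
    and dX: "degree X \<le> 1" and dY: "degree Y \<le> m" and dH: "degree H \<le> 2 * m" and m: "1 \<le> m"
  shows "\<exists>P. degree P \<le> m * k \<and> (\<forall>s\<in>S. r s ^ k * g (\<theta> s) = poly P s)"
  using assms(1)
proof (induction rule: TP.induct)
  case TP0 thus ?case by (intro exI[of _ 0]) auto
next
  case (TPm a b c)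
  obtain q where q: "k = a + b + 2 * q" using TPm by (metis add_diff_inverse_nat evenE le_add_diff_inverse not_less even_add)
  define P where "P = smult c (X ^ a * Y ^ b * H ^ q)"
  have "degree P \<le> a * 1 + b * m + q * (2 * m)"
  proof -
    have "degree P \<le> degree (X ^ a * Y ^ b * H ^ q)" unfolding P_def by (rule degree_smult_le)
    also have "\<dots> \<le> degree X * a + degree Y * b + degree H * q"
      by (meson add_mono degree_mult_le degree_power_le order.trans)
    also have "\<dots> \<le> 1 * a + m * b + (2 * m) * q" using dX dY dH by (intro add_mono mult_right_mono) auto
    finally show ?thesis by (simp add: algebra_simps)
  qed
  also have "\<dots> \<le> m * k" using m unfolding q by (simp add: algebra_simps)
  finally have dP: "degree P \<le> m * k" .
  have "r s ^ k * (c * cos (\<theta> s) ^ a * sin (\<theta> s) ^ b) = poly P s" if s: "s \<in> S" for s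
  proof -
    have "r s ^ k * (c * cos (\<theta> s) ^ a * sin (\<theta> s) ^ b) = c * (r s * cos (\<theta> s)) ^ a * (r s * sin (\<theta> s)) ^ b * ((r s)^2) ^ q"
    proof -
      have pq: "(x ^ q) ^ 2 = (x ^ 2) ^ q" for x :: real by (simp add: power_mult[symmetric] mult.commute)
      show ?thesis unfolding q by (simp add: power_add power_mult power_mult_distrib algebra_simps pq)
    qed
    also have "\<dots> = poly P s" using geo[OF s] by (simp add: P_def poly_power)
    finally show ?thesis .
  qed
  thus ?case using dP by blast
next
  case (TPadd f g)
  obtain P1 where 1: "degree P1 \<le> m * k" "\<forall>s\<in>S. r s ^ k * f (\<theta> s) = poly P1 s" using TPadd.IH(1) by blast
  obtain P2 where 2: "degree P2 \<le> m * k" "\<forall>s\<in>S. r s ^ k * g (\<theta> s) = poly P2 s" using TPadd.IH(2) by blast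
  show ?case using 1 2 by (intro exI[of _ "P1 + P2"]) (auto intro: degree_add_le simp: distrib_left)
qed

definition thBf :: "nat \<Rightarrow> real \<Rightarrow> real" where "thBf m s = arctan (s ^ (m - 1))"
definition thAf :: "nat \<Rightarrow> real \<Rightarrow> real" where "thAf m s = pi + arctan ((- s) ^ (m - 1))"
definition Thf :: "nat \<Rightarrow> real \<Rightarrow> real" where "Thf m s = pi + arctan ((- s) ^ (m - 1)) - arctan (s ^ (m - 1))"
definition rf :: "nat \<Rightarrow> real \<Rightarrow> real" where "rf m s = sqrt (s ^ 2 + s ^ (2 * m))"
definition PH :: "nat \<Rightarrow> real poly" where "PH m = [:0, 0, 1:] + monom 1 (2 * m)"

lemma poly_PH: "poly (PH m) s = s ^ 2 + s ^ (2 * m)"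
  by (simp add: PH_def poly_monom power2_eq_square)

lemma degree_PH: "1 \<le> m \<Longrightarrow> degree (PH m) \<le> 2 * m"
  unfolding PH_def by (intro degree_add_le) (auto simp: degree_monom_le order.trans[OF degree_monom_le])

lemma Thf_eq: "Thf m s = thAf m s - thBf m s"
  by (simp add: Thf_def thAf_def thBf_def)

lemma Thf_bounds: "0 < Thf m s" "Thf m s < 2 * pi"
  using arctan_bounded[of "(- s) ^ (m - 1)"] arctan_bounded[of "s ^ (m - 1)"]
  by (auto simp: Thf_def)

lemma geo:
  assumes m: "1 \<le> m" and s: "0 < s"
  shows "0 < rf m s" "rf m s * cos (thBf m s) = s" "rf m s * sin (thBf m s) = s ^ m"
    "rf m s * cos (thAf m s) = - s" "rf m s * sin (thAf m s) = (- s) ^ m"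
    "(rf m s) ^ 2 = s ^ 2 + s ^ (2 * m)"
proof -
  define w where "w = s ^ (m - 1)"
  define v where "v = (- s) ^ (m - 1)"
  define q where "q = sqrt (1 + w ^ 2)"
  have q0: "0 < q" unfolding q_def by (simp add: add_pos_nonneg)
  have vw: "v ^ 2 = w ^ 2" unfolding v_def w_def by (simp add: power_mult_distrib[symmetric] power_mult[symmetric] mult.commute)
  have sm: "s ^ m = s * w" unfolding w_def using m by (metis Suc_diff_le diff_Suc_1 power_Suc)
  have msm: "(- s) ^ m = (- s) * v" unfolding v_def using m by (metis Suc_diff_le diff_Suc_1 power_Suc)
  have s2m: "s ^ (2 * m) = s ^ 2 * w ^ 2"
  proof -
    have "s ^ (2 * m) = (s ^ m) ^ 2" by (simp add: power_mult[symmetric] mult.commute)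
    thus ?thesis unfolding sm by (simp add: power_mult_distrib)
  qed
  have rq: "rf m s = s * q"
  proof -
    have "s ^ 2 + s ^ (2 * m) = (s * q) ^ 2" unfolding s2m q_def by (simp add: power_mult_distrib algebra_simps)
    thus ?thesis unfolding rf_def using s q0 by simp
  qed
  show "0 < rf m s" using rq s q0 by simp
  show "rf m s * cos (thBf m s) = s" unfolding rq thBf_def cos_arctan w_def[symmetric] q_def[symmetric] using q0 by simp
  show "rf m s * sin (thBf m s) = s ^ m" unfolding rq thBf_def sin_arctan w_def[symmetric] q_def[symmetric] sm using q0 by simp
  have qv: "sqrt (1 + v ^ 2) = q" unfolding q_def vw ..
  show "rf m s * cos (thAf m s) = - s" unfolding rq thAf_def cos_periodic_pi2 cos_arctan v_def[symmetric] qv using q0 by simp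
  show "rf m s * sin (thAf m s) = (- s) ^ m" unfolding rq thAf_def sin_periodic_pi2 sin_arctan v_def[symmetric] qv msm using q0 by simp
  show "(rf m s) ^ 2 = s ^ 2 + s ^ (2 * m)" unfolding rf_def by simp
qed

lemma TERM:
  assumes m: "1 \<le> m"
  shows "\<exists>A C. degree A \<le> m * (a + b) \<and> degree C \<le> m * (a + b) \<and>
    (\<forall>s>0. ((\<lambda>t. rf m s ^ (a + b) * (cos t ^ a * sin t ^ b)) has_integral (poly C s * Thf m s + poly A s)) {thBf m s..thAf m s} \<and>
           ((\<lambda>t. rf m s ^ (a + b) * (cos t ^ a * sin t ^ b)) has_integral (poly (- C) s * Thf m s + poly (smult (2 * pi) C - A) s)) {thAf m s - 2 * pi..thBf m s})"
proof -
  let ?k = "a + b"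
  have "TP ?k (\<lambda>t. 1 * cos t ^ a * sin t ^ b)" by (rule TP.TPm) auto
  then obtain c0 g where g: "TP ?k g" "odd ?k \<longrightarrow> c0 = 0" "\<forall>t. DERIV g t :> 1 * cos t ^ a * sin t ^ b - c0"
    using TP_AD by blast
  have dX1: "degree [:0, 1::real:] \<le> 1" and dX2: "degree [:0, -1::real:] \<le> 1" by auto
  have dY1: "degree ([:0, 1::real:] ^ m) \<le> m" and dY2: "degree ([:0, -1::real:] ^ m) \<le> m"
    using degree_power_le[of "[:0, 1::real:]" m] degree_power_le[of "[:0, -1::real:]" m] by auto
  obtain PA where PA: "degree PA \<le> m * ?k" "\<forall>s\<in>{0<..}. rf m s ^ ?k * g (thAf m s) = poly PA s"
    using TP_eval[OF g(1), of "{0<..}" "rf m" "thAf m" "[:0, -1:]" "[:0, -1:] ^ m" "PH m", OF _ dX2 dY2 degree_PH[OF m] m]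
      geo[OF m] by (auto simp: poly_PH poly_power)
  obtain PB where PB: "degree PB \<le> m * ?k" "\<forall>s\<in>{0<..}. rf m s ^ ?k * g (thBf m s) = poly PB s"
    using TP_eval[OF g(1), of "{0<..}" "rf m" "thBf m" "[:0, 1:]" "[:0, 1:] ^ m" "PH m", OF _ dX1 dY1 degree_PH[OF m] m]
      geo[OF m] by (auto simp: poly_PH poly_power)
  define C where "C = (if even ?k then smult c0 (PH m ^ (?k div 2)) else 0)"
  have dC: "degree C \<le> m * ?k"
  proof (cases "even ?k")
    case True
    have "degree C \<le> degree (PH m) * (?k div 2)" unfolding C_def using True
      by (simp add: degree_power_le order.trans[OF degree_smult_le])
    also have "\<dots> \<le> (2 * m) * (?k div 2)" using degree_PH[OF m] by (rule mult_right_mono) simp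
    also have "\<dots> \<le> m * ?k" using True by (auto elim!: evenE)
    finally show ?thesis .
  next
    case False thus ?thesis by (simp add: C_def)
  qed
  have rC: "rf m s ^ ?k * c0 = poly C s" if s: "0 < s" for s
  proof (cases "even ?k")
    case True
    then obtain q where q: "?k = 2 * q" by blast
    have "rf m s ^ ?k = ((rf m s) ^ 2) ^ q" unfolding q by (simp add: power_mult)
    also have "\<dots> = poly (PH m ^ (?k div 2)) s" using geo(6)[OF m s] q by (simp add: poly_PH poly_power)
    finally show ?thesis using True by (simp add: C_def mult.commute)
  next
    case False thus ?thesis using g(2) by (simp add: C_def)
  qed
  define A where "A = PA - PB"
  have dA: "degree A \<le> m * ?k" unfolding A_def by (rule degree_diff_le[OF PA(1) PB(1)])
  have FTC: "((\<lambda>t. rf m s ^ ?k * (cos t ^ a * sin t ^ b)) has_integral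
      (rf m s ^ ?k * g \<alpha> - rf m s ^ ?k * g \<beta> + rf m s ^ ?k * c0 * (\<alpha> - \<beta>))) {\<beta>..\<alpha>}" if "\<beta> \<le> \<alpha>" for s \<alpha> \<beta>
  proof -
    let ?F = "\<lambda>t. rf m s ^ ?k * g t + rf m s ^ ?k * c0 * t"
    have "(?F has_vector_derivative rf m s ^ ?k * (cos t ^ a * sin t ^ b)) (at t within {\<beta>..\<alpha>})" for t
    proof -
      have "DERIV ?F t :> rf m s ^ ?k * (1 * cos t ^ a * sin t ^ b - c0) + rf m s ^ ?k * c0 * 1"
        by (intro DERIV_add DERIV_cmult g(3)[rule_format] DERIV_ident)
      hence "DERIV ?F t :> rf m s ^ ?k * (cos t ^ a * sin t ^ b)" by (simp add: algebra_simps)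
      thus ?thesis using has_real_derivative_iff_has_vector_derivative has_vector_derivative_at_within by blast
    qed
    from fundamental_theorem_of_calculus[OF that this]
    show ?thesis by (simp add: algebra_simps)
  qed
  have main: "((\<lambda>t. rf m s ^ ?k * (cos t ^ a * sin t ^ b)) has_integral (poly C s * Thf m s + poly A s)) {thBf m s..thAf m s} \<and>
           ((\<lambda>t. rf m s ^ ?k * (cos t ^ a * sin t ^ b)) has_integral (poly (- C) s * Thf m s + poly (smult (2 * pi) C - A) s)) {thAf m s - 2 * pi..thBf m s}"
    if s: "0 < s" for s
  proof
    have le1: "thBf m s \<le> thAf m s" using Thf_bounds[of m s] Thf_eq[of m s] by simp
    have le2: "thAf m s - 2 * pi \<le> thBf m s" using Thf_bounds[of m s] Thf_eq[of m s] by simp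
    have e1: "rf m s ^ ?k * g (thAf m s) - rf m s ^ ?k * g (thBf m s) + rf m s ^ ?k * c0 * (thAf m s - thBf m s)
        = poly C s * Thf m s + poly A s"
      using PA(2) PB(2) rC[OF s] s by (simp add: A_def Thf_eq algebra_simps)
    show "((\<lambda>t. rf m s ^ ?k * (cos t ^ a * sin t ^ b)) has_integral (poly C s * Thf m s + poly A s)) {thBf m s..thAf m s}"
      using FTC[OF le1, of s] unfolding e1 .
    have e2: "rf m s ^ ?k * g (thBf m s) - rf m s ^ ?k * g (thAf m s - 2 * pi) + rf m s ^ ?k * c0 * (thBf m s - (thAf m s - 2 * pi))
        = poly (- C) s * Thf m s + poly (smult (2 * pi) C - A) s"
      using PA(2) PB(2) rC[OF s] s TP_periodic[OF g(1), of "thAf m s"] by (simp add: A_def Thf_eq algebra_simps)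
    show "((\<lambda>t. rf m s ^ ?k * (cos t ^ a * sin t ^ b)) has_integral (poly (- C) s * Thf m s + poly (smult (2 * pi) C - A) s)) {thAf m s - 2 * pi..thBf m s}"
      using FTC[OF le2, of s] unfolding e2 .
  qed
  show ?thesis using dA dC main by blast
qed

lemma expand_integrand:
  fixes r t :: real
  shows "poly2 n q (r * cos t) (r * sin t) * (r * sin t) + poly2 n p (r * cos t) (r * sin t) * (r * cos t) =
    (\<Sum>i\<le>n. \<Sum>j\<le>n - i. q i j * (r ^ (i + Suc j) * (cos t ^ i * sin t ^ Suc j))
                       + p i j * (r ^ (Suc i + j) * (cos t ^ Suc i * sin t ^ j)))"
proof -
  have "poly2 n q (r * cos t) (r * sin t) * (r * sin t) = (\<Sum>i\<le>n. \<Sum>j\<le>n - i. q i j * (r ^ (i + Suc j) * (cos t ^ i * sin t ^ Suc j)))"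
    unfolding poly2_def sum_distrib_right
    by (intro sum.cong refl) (simp add: power_mult_distrib power_add algebra_simps)
  moreover have "poly2 n p (r * cos t) (r * sin t) * (r * cos t) = (\<Sum>i\<le>n. \<Sum>j\<le>n - i. p i j * (r ^ (Suc i + j) * (cos t ^ Suc i * sin t ^ j)))"
    unfolding poly2_def sum_distrib_right
    by (intro sum.cong refl) (simp add: power_mult_distrib power_add algebra_simps)
  ultimately show ?thesis by (simp add: sum.distrib)
qed

lemma ARC:
  fixes p q :: "nat \<Rightarrow> nat \<Rightarrow> real" and C' A' :: "nat \<Rightarrow> nat \<Rightarrow> real poly" and r Tv s :: real
  assumes T: "\<And>a b. ((\<lambda>t. r ^ (a + b) * (cos t ^ a * sin t ^ b)) has_integral (poly (C' a b) s * Tv + poly (A' a b) s)) I"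
  shows "((\<lambda>t. poly2 n q (r * cos t) (r * sin t) * (r * sin t) + poly2 n p (r * cos t) (r * sin t) * (r * cos t)) has_integral
     (poly (\<Sum>i\<le>n. \<Sum>j\<le>n - i. smult (q i j) (C' i (Suc j)) + smult (p i j) (C' (Suc i) j)) s * Tv
      + poly (\<Sum>i\<le>n. \<Sum>j\<le>n - i. smult (q i j) (A' i (Suc j)) + smult (p i j) (A' (Suc i) j)) s)) I"
proof -
  have "((\<lambda>t. \<Sum>i\<le>n. \<Sum>j\<le>n - i. q i j * (r ^ (i + Suc j) * (cos t ^ i * sin t ^ Suc j))
                       + p i j * (r ^ (Suc i + j) * (cos t ^ Suc i * sin t ^ j))) has_integral
     (\<Sum>i\<le>n. \<Sum>j\<le>n - i. q i j * (poly (C' i (Suc j)) s * Tv + poly (A' i (Suc j)) s)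
                       + p i j * (poly (C' (Suc i) j) s * Tv + poly (A' (Suc i) j) s))) I"
    by (intro has_integral_sum finite_atMost has_integral_add has_integral_mult_right T)
  moreover have "(\<Sum>i\<le>n. \<Sum>j\<le>n - i. q i j * (poly (C' i (Suc j)) s * Tv + poly (A' i (Suc j)) s)
                       + p i j * (poly (C' (Suc i) j) s * Tv + poly (A' (Suc i) j) s)) =
     poly (\<Sum>i\<le>n. \<Sum>j\<le>n - i. smult (q i j) (C' i (Suc j)) + smult (p i j) (C' (Suc i) j)) s * Tv
      + poly (\<Sum>i\<le>n. \<Sum>j\<le>n - i. smult (q i j) (A' i (Suc j)) + smult (p i j) (A' (Suc i) j)) s"
  proof -
    have "(\<Sum>i\<le>n. \<Sum>j\<le>n - i. q i j * (poly (C' i (Suc j)) s * Tv + poly (A' i (Suc j)) s)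
                       + p i j * (poly (C' (Suc i) j) s * Tv + poly (A' (Suc i) j) s)) =
      (\<Sum>i\<le>n. \<Sum>j\<le>n - i. Tv * (q i j * poly (C' i (Suc j)) s + p i j * poly (C' (Suc i) j) s)
                       + (q i j * poly (A' i (Suc j)) s + p i j * poly (A' (Suc i) j) s))"
      by (intro sum.cong refl) (simp add: algebra_simps)
    also have "\<dots> = Tv * (\<Sum>i\<le>n. \<Sum>j\<le>n - i. q i j * poly (C' i (Suc j)) s + p i j * poly (C' (Suc i) j) s)
        + (\<Sum>i\<le>n. \<Sum>j\<le>n - i. q i j * poly (A' i (Suc j)) s + p i j * poly (A' (Suc i) j) s)"
      by (simp add: sum.distrib sum_distrib_left distrib_left)
    finally show ?thesis by (simp only: poly_sum poly_add poly_smult mult.commute)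
  qed
  ultimately show ?thesis by (simp only: expand_integrand)
qed

lemma degree_ARC:
  fixes p q :: "nat \<Rightarrow> nat \<Rightarrow> real" and C' :: "nat \<Rightarrow> nat \<Rightarrow> real poly"
  assumes "\<And>a b. a + b \<le> Suc n \<Longrightarrow> degree (C' a b) \<le> D"
  shows "degree (\<Sum>i\<le>n. \<Sum>j\<le>n - i. smult (q i j) (C' i (Suc j)) + smult (p i j) (C' (Suc i) j)) \<le> D"
  by (intro degree_sum_le finite_atMost degree_add_le order.trans[OF degree_smult_le] assms) auto

lemma sol_s_eq:
  assumes m: "1 \<le> m" and s: "0 < s"
  shows "sol_s m (s ^ 2 + s ^ (2 * m)) = s"
  unfolding sol_s_def
proof (rule the_equality)
  show "0 < s \<and> s ^ 2 + s ^ (2 * m) = s ^ 2 + s ^ (2 * m)" using s by simp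
  fix t assume t: "0 < t \<and> t ^ 2 + t ^ (2 * m) = s ^ 2 + s ^ (2 * m)"
  have mono: "x < y \<Longrightarrow> 0 < x \<Longrightarrow> x ^ 2 + x ^ (2 * m) < y ^ 2 + y ^ (2 * m)" for x y :: real
    using power_strict_mono[of x y 2] power_strict_mono[of x y "2 * m"] m by (intro add_strict_mono) auto
  show "t = s"
  proof (rule ccontr)
    assume "t \<noteq> s"
    hence "t < s \<or> s < t" by auto
    thus False using mono[of t s] mono[of s t] t s by auto
  qed
qed

lemma closed_form:
  assumes m: "1 \<le> m"
  shows "\<exists>P R. degree P \<le> m * (n + 1) \<and> degree R \<le> m * (n + 1) \<and>
    (\<forall>s>0. melnikov m n ap bp am bm (s ^ 2 + s ^ (2 * m)) = poly P s + poly R s * Thf m s)"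
proof -
  have "\<forall>a b. \<exists>A C. degree A \<le> m * (a + b) \<and> degree C \<le> m * (a + b) \<and>
    (\<forall>s>0. ((\<lambda>t. rf m s ^ (a + b) * (cos t ^ a * sin t ^ b)) has_integral (poly C s * Thf m s + poly A s)) {thBf m s..thAf m s} \<and>
           ((\<lambda>t. rf m s ^ (a + b) * (cos t ^ a * sin t ^ b)) has_integral (poly (- C) s * Thf m s + poly (smult (2 * pi) C - A) s)) {thAf m s - 2 * pi..thBf m s})"
    using TERM[OF m] by blast
  hence "\<forall>ab. \<exists>X. degree (fst X) \<le> m * (fst ab + snd ab) \<and> degree (snd X) \<le> m * (fst ab + snd ab) \<and>
    (\<forall>s>0. ((\<lambda>t. rf m s ^ (fst ab + snd ab) * (cos t ^ fst ab * sin t ^ snd ab)) has_integral (poly (snd X) s * Thf m s + poly (fst X) s)) {thBf m s..thAf m s} \<and>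
           ((\<lambda>t. rf m s ^ (fst ab + snd ab) * (cos t ^ fst ab * sin t ^ snd ab)) has_integral (poly (- snd X) s * Thf m s + poly (smult (2 * pi) (snd X) - fst X) s)) {thAf m s - 2 * pi..thBf m s})"
    by auto
  then obtain F where F: "\<forall>ab. degree (fst (F ab)) \<le> m * (fst ab + snd ab) \<and> degree (snd (F ab)) \<le> m * (fst ab + snd ab) \<and>
    (\<forall>s>0. ((\<lambda>t. rf m s ^ (fst ab + snd ab) * (cos t ^ fst ab * sin t ^ snd ab)) has_integral (poly (snd (F ab)) s * Thf m s + poly (fst (F ab)) s)) {thBf m s..thAf m s} \<and>
           ((\<lambda>t. rf m s ^ (fst ab + snd ab) * (cos t ^ fst ab * sin t ^ snd ab)) has_integral (poly (- snd (F ab)) s * Thf m s + poly (smult (2 * pi) (snd (F ab)) - fst (F ab)) s)) {thAf m s - 2 * pi..thBf m s})"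
    using choice[of "\<lambda>ab X. degree (fst X) \<le> m * (fst ab + snd ab) \<and> degree (snd X) \<le> m * (fst ab + snd ab) \<and>
    (\<forall>s>0. ((\<lambda>t. rf m s ^ (fst ab + snd ab) * (cos t ^ fst ab * sin t ^ snd ab)) has_integral (poly (snd X) s * Thf m s + poly (fst X) s)) {thBf m s..thAf m s} \<and>
           ((\<lambda>t. rf m s ^ (fst ab + snd ab) * (cos t ^ fst ab * sin t ^ snd ab)) has_integral (poly (- snd X) s * Thf m s + poly (smult (2 * pi) (snd X) - fst X) s)) {thAf m s - 2 * pi..thBf m s})"] by blast
  define AT where "AT = (\<lambda>a b. fst (F (a, b)))"
  define CT where "CT = (\<lambda>a b. snd (F (a, b)))"
  have ATC: "\<And>a b. degree (AT a b) \<le> m * (a + b) \<and> degree (CT a b) \<le> m * (a + b) \<and>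
    (\<forall>s>0. ((\<lambda>t. rf m s ^ (a + b) * (cos t ^ a * sin t ^ b)) has_integral (poly (CT a b) s * Thf m s + poly (AT a b) s)) {thBf m s..thAf m s} \<and>
           ((\<lambda>t. rf m s ^ (a + b) * (cos t ^ a * sin t ^ b)) has_integral (poly (- CT a b) s * Thf m s + poly (smult (2 * pi) (CT a b) - AT a b) s)) {thAf m s - 2 * pi..thBf m s})"
    unfolding AT_def CT_def using spec[OF F, of "(a, b)" for a b] by simp
  define CM where "CM = (\<lambda>a b. - CT a b)"
  define AM where "AM = (\<lambda>a b. smult (2 * pi) (CT a b) - AT a b)"
  let ?D = "m * (n + 1)"
  have degs: "degree (CT a b) \<le> ?D" "degree (AT a b) \<le> ?D" "degree (CM a b) \<le> ?D" "degree (AM a b) \<le> ?D"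
    if "a + b \<le> Suc n" for a b
  proof -
    have "m * (a + b) \<le> m * Suc n" using that by (rule mult_le_mono2)
    hence "m * (a + b) \<le> ?D" by simp
    thus "degree (CT a b) \<le> ?D" "degree (AT a b) \<le> ?D" "degree (CM a b) \<le> ?D" "degree (AM a b) \<le> ?D"
      using ATC[of a b] unfolding CM_def AM_def
      by (auto intro!: degree_diff_le order.trans[OF degree_smult_le])
  qed
  define S where "S = (\<lambda>(p::nat\<Rightarrow>nat\<Rightarrow>real) (q::nat\<Rightarrow>nat\<Rightarrow>real) (X::nat\<Rightarrow>nat\<Rightarrow>real poly).
     (\<Sum>i\<le>n. \<Sum>j\<le>n - i. smult (q i j) (X i (Suc j)) + smult (p i j) (X (Suc i) j)))"
  define P where "P = S ap bp AT + S am bm AM"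
  define R where "R = S ap bp CT + S am bm CM"
  have dS: "degree (S p q X) \<le> ?D" if "\<And>a b. a + b \<le> Suc n \<Longrightarrow> degree (X a b) \<le> ?D" for p q X
    unfolding S_def by (rule degree_ARC) (rule that)
  have dP: "degree P \<le> ?D" unfolding P_def by (intro degree_add_le dS degs)
  have dR: "degree R \<le> ?D" unfolding R_def by (intro degree_add_le dS degs)
  have val: "melnikov m n ap bp am bm (s ^ 2 + s ^ (2 * m)) = poly P s + poly R s * Thf m s" if s: "0 < s" for s
  proof -
    have sol: "sol_s m (s ^ 2 + s ^ (2 * m)) = s" by (rule sol_s_eq[OF m s])
    have r: "sqrt (s ^ 2 + s ^ (2 * m)) = rf m s" by (simp add: rf_def)
    have pm: "x ^ m = x * x ^ (m - 1)" for x :: real using m by (cases m) auto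
    have q1: "s ^ m / s = s ^ (m - 1)" using s by (simp add: pm)
    have q2: "(- s) ^ m / (- s) = (- s) ^ (m - 1)" using s by (simp add: pm[of "- s"])
    have B: "arctan (s ^ m / s) = thBf m s" by (simp add: q1 thBf_def)
    have A: "pi + arctan ((- s) ^ m / (- s)) = thAf m s" unfolding q2 thAf_def ..
    have I1: "cw_arc_int (poly2 n ap) (poly2 n bp) (rf m s) (thAf m s) (thBf m s) = poly (S ap bp CT) s * Thf m s + poly (S ap bp AT) s"
      unfolding cw_arc_int_def S_def
      by (rule integral_unique, rule ARC) (use ATC s in blast)
    have I2: "cw_arc_int (poly2 n am) (poly2 n bm) (rf m s) (thBf m s) (thAf m s - 2 * pi) = poly (S am bm CM) s * Thf m s + poly (S am bm AM) s"
      unfolding cw_arc_int_def S_def CM_def AM_def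
      by (rule integral_unique, rule ARC) (use ATC s in blast)
    show ?thesis
      unfolding melnikov_def Let_def sol r B A I1 I2 P_def R_def by (simp add: algebra_simps)
  qed
  show ?thesis using dP dR val by blast
qed

definition Epoly :: "nat \<Rightarrow> real poly" where "Epoly m = [:1:] + monom 1 (2 * (m - 1))"
definition Kpoly :: "nat \<Rightarrow> real poly" where "Kpoly m = pderiv ([:0, -1:] ^ (m - 1)) - pderiv ([:0, 1:] ^ (m - 1))"

lemma poly_Epoly: "poly (Epoly m) s = 1 + s ^ (2 * (m - 1))"
  by (simp add: Epoly_def poly_monom)

lemma Epoly_pos: "poly (Epoly m) s \<noteq> 0"
proof -
  have "0 \<le> s ^ (2 * (m - 1))" by (simp add: power_mult)
  thus ?thesis unfolding poly_Epoly by linarith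
qed

lemma degree_Epoly: "degree (Epoly m) \<le> 2 * m"
  unfolding Epoly_def by (intro degree_add_le) (auto intro: order.trans[OF degree_monom_le])

lemma degree_Kpoly: "degree (Kpoly m) \<le> m"
proof -
  have "degree (pderiv ([:0, c:] ^ (m - 1))) \<le> m" for c :: real
  proof -
    have "degree (pderiv ([:0, c:] ^ (m - 1))) \<le> degree ([:0, c:] ^ (m - 1))" by (simp add: degree_pderiv)
    also have "\<dots> \<le> degree [:0, c:] * (m - 1)" by (rule degree_power_le)
    also have "\<dots> \<le> m" by (cases "c = 0") auto
    finally show ?thesis .
  qed
  thus ?thesis unfolding Kpoly_def by (intro degree_diff_le) auto
qed

lemma Thf_DERIV: "DERIV (Thf m) s :> poly (Kpoly m) s / poly (Epoly m) s"
proof -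
  let ?U1 = "[:0, -1:] ^ (m - 1) :: real poly" and ?U2 = "[:0, 1:] ^ (m - 1) :: real poly"
  have T: "Thf m = (\<lambda>s. pi + arctan (poly ?U1 s) - arctan (poly ?U2 s))"
    by (rule ext) (simp add: Thf_def poly_power)
  have e1: "1 + (poly ?U1 s)\<^sup>2 = poly (Epoly m) s" "1 + (poly ?U2 s)\<^sup>2 = poly (Epoly m) s"
    by (simp_all add: poly_Epoly poly_power power_mult[symmetric] power_mult_distrib mult.commute)
  have "DERIV (\<lambda>s. pi + arctan (poly ?U1 s) - arctan (poly ?U2 s)) s :>
        0 + inverse (1 + (poly ?U1 s)\<^sup>2) * poly (pderiv ?U1) s - inverse (1 + (poly ?U2 s)\<^sup>2) * poly (pderiv ?U2) s"
    by (intro DERIV_diff DERIV_add DERIV_const DERIV_chain2[OF DERIV_arctan poly_DERIV])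
  moreover have "0 + inverse (1 + (poly ?U1 s)\<^sup>2) * poly (pderiv ?U1) s - inverse (1 + (poly ?U2 s)\<^sup>2) * poly (pderiv ?U2) s
      = poly (Kpoly m) s / poly (Epoly m) s"
    unfolding e1 Kpoly_def by (simp add: field_simps Epoly_pos)
  ultimately show ?thesis unfolding T by simp
qed

lemma PH_deriv_pos:
  assumes m: "1 \<le> m" and s: "0 < s"
  shows "poly (pderiv (PH m)) s > 0"
proof -
  have d1: "DERIV (\<lambda>s. poly (PH m) s) s :> poly (pderiv (PH m)) s" by (rule poly_DERIV)
  have d2: "DERIV (\<lambda>s. poly (PH m) s) s :> 2 * s + real (2 * m) * s ^ (2 * m - 1)"
    unfolding poly_PH by (rule DERIV_cong, (rule derivative_eq_intros refl)+) simp
  have "poly (pderiv (PH m)) s = 2 * s + real (2 * m) * s ^ (2 * m - 1)" by (rule DERIV_unique[OF d1 d2])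
  moreover have "0 \<le> real (2 * m) * s ^ (2 * m - 1)" using s by simp
  ultimately show ?thesis using s by linarith
qed

lemma sol_s_props:
  assumes m: "1 \<le> m" and h: "0 < h"
  shows "0 < sol_s m h" "poly (PH m) (sol_s m h) = h"
proof -
  have cont: "\<forall>x. 0 \<le> x \<and> x \<le> h + 1 \<longrightarrow> isCont (\<lambda>s. poly (PH m) s) x" by simp
  have z2: "(0::real) ^ (2 * m) = 0" using m by simp
  have f0: "poly (PH m) 0 \<le> h" using h by (simp add: poly_PH z2)
  have f1: "h \<le> poly (PH m) (h + 1)"
  proof -
    have "h \<le> (h + 1) ^ 2" using h by (simp add: power2_eq_square algebra_simps)
    moreover have "0 \<le> (h + 1) ^ (2 * m)" using h by simp
    ultimately show ?thesis unfolding poly_PH by linarith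
  qed
  obtain x where x: "0 \<le> x" "x \<le> h + 1" "poly (PH m) x = h"
    using IVT[OF f0 f1 _ cont] h by auto
  have x0: "0 < x" using x(1,3) h z2 by (cases "x = 0") (auto simp: poly_PH)
  have "sol_s m h = x" using sol_s_eq[OF m x0] x(3) by (simp add: poly_PH)
  thus "0 < sol_s m h" "poly (PH m) (sol_s m h) = h" using x0 x(3) by auto
qed

lemma sol_s_DERIV:
  assumes m: "1 \<le> m" and h: "0 < h"
  shows "DERIV (sol_s m) h :> poly 1 (sol_s m h) / poly (pderiv (PH m)) (sol_s m h) ^ 1"
proof -
  let ?\<sigma> = "sol_s m" and ?\<phi> = "\<lambda>s. poly (PH m) s"
  define s0 where "s0 = ?\<sigma> h"
  have s0: "0 < s0" "?\<phi> s0 = h" using sol_s_props[OF m h] by (auto simp: s0_def)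
  have inv: "?\<sigma> (?\<phi> z) = z" if "0 < z" for z using sol_s_eq[OF m that] by (simp add: poly_PH)
  have "isCont ?\<sigma> (?\<phi> s0)"
  proof (rule isCont_inverse_function[where d = "s0 / 2" and f = ?\<phi> and x = s0])
    show "0 < s0 / 2" using s0 by simp
    show "?\<sigma> (?\<phi> z) = z" if "\<bar>z - s0\<bar> \<le> s0 / 2" for z
      by (rule inv) (use that s0 in linarith)
    show "isCont ?\<phi> z" for z by simp
  qed
  hence cont: "isCont ?\<sigma> h" using s0 by simp
  have "DERIV ?\<sigma> h :> inverse (poly (pderiv (PH m)) (?\<sigma> h))"
  proof (rule DERIV_inverse_function[where f = ?\<phi> and a = 0 and b = "h + 1"])
    show "DERIV ?\<phi> (?\<sigma> h) :> poly (pderiv (PH m)) (?\<sigma> h)" by (rule poly_DERIV)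
    show "poly (pderiv (PH m)) (?\<sigma> h) \<noteq> 0" using PH_deriv_pos[OF m s0(1)] by (simp add: s0_def)
    show "0 < h" "h < h + 1" using h by auto
    show "?\<phi> (?\<sigma> y) = y" if "0 < y" "y < h + 1" for y using sol_s_props[OF m that(1)] by simp
    show "isCont ?\<sigma> h" by (rule cont)
  qed
  thus ?thesis by (simp add: divide_inverse)
qed

lemma melnikov_count:
  assumes m: "1 \<le> m" and nz: "\<exists>h>0. melnikov m n ap bp am bm h \<noteq> 0"
  shows "zeros_mult (melnikov m n ap bp am bm) {0<..} \<le> enat (2 * (m * (n + 1)) + 1 + (m + 2 * m) * (m * (n + 1) + 1))"
proof -
  let ?d = "m * (n + 1)"
  let ?M = "melnikov m n ap bp am bm"
  obtain P R where PR: "degree P \<le> ?d" "degree R \<le> ?d"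
    "\<forall>s>0. ?M (s ^ 2 + s ^ (2 * m)) = poly P s + poly R s * Thf m s"
    using closed_form[OF m] by blast
  define G where "G = (\<lambda>s. poly P s + poly R s * Thf m s)"
  have MG: "?M h = G (sol_s m h)" if "0 < h" for h
  proof -
    have "?M h = ?M ((sol_s m h) ^ 2 + (sol_s m h) ^ (2 * m))" using sol_s_props[OF m that] by (simp add: poly_PH)
    also have "\<dots> = G (sol_s m h)" using PR(3) sol_s_props[OF m that] by (simp add: G_def)
    finally show ?thesis .
  qed
  have nzG: "\<exists>s>0. poly P s + poly R s * Thf m s \<noteq> 0"
  proof -
    obtain h where h: "0 < h" "?M h \<noteq> 0" using nz by blast
    have "G (sol_s m h) \<noteq> 0" using MG[OF h(1)] h(2) by simp
    thus ?thesis using sol_s_props(1)[OF m h(1)] unfolding G_def by blast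
  qed
  have GC: "smooth_on UNIV G \<and> zeros_mult G {0<..} \<le> enat (2 * ?d + 1 + (m + 2 * m) * (?d + 1))"
    unfolding G_def
    by (rule G_count[OF Epoly_pos Thf_DERIV PR(1) PR(2) degree_Kpoly degree_Epoly nzG])
  let ?\<psi> = "\<lambda>s. poly 1 s / poly (pderiv (PH m)) s ^ 1"
  show ?thesis
  proof (rule compose_count[where G = G and \<sigma> = "sol_s m" and \<psi> = ?\<psi>])
    show "smooth_on {0<..} G" using GC smooth_on_subset by blast
    have Dnz: "\<And>x. x \<in> {0<..} \<Longrightarrow> poly (pderiv (PH m)) x \<noteq> 0"
      using PH_deriv_pos[OF m] by (metis greaterThan_iff less_irrefl)
    show "smooth_on {0<..} ?\<psi>" by (rule smooth_quot[OF open_greaterThan Dnz])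
    show "?\<psi> s \<noteq> 0" if "0 < s" for s using PH_deriv_pos[OF m that] by simp
    show "0 < sol_s m h" if "0 < h" for h using sol_s_props[OF m that] by simp
    show "inj_on (sol_s m) {0<..}"
    proof (rule inj_onI)
      fix x y :: real assume xy: "x \<in> {0<..}" "y \<in> {0<..}" "sol_s m x = sol_s m y"
      have "x = poly (PH m) (sol_s m x)" using sol_s_props(2)[OF m, of x] xy(1) by simp
      also have "\<dots> = poly (PH m) (sol_s m y)" using xy(3) by simp
      also have "\<dots> = y" using sol_s_props(2)[OF m, of y] xy(2) by simp
      finally show "x = y" .
    qed
    show "DERIV (sol_s m) h :> ?\<psi> (sol_s m h)" if "0 < h" for h by (rule sol_s_DERIV[OF m that])
    show "?M h = G (sol_s m h)" if "0 < h" for h by (rule MG[OF that])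
    show "zeros_mult G {0<..} \<le> enat (2 * ?d + 1 + (m + 2 * m) * (?d + 1))" using GC by blast
  qed
qed

theorem theorem1p2:
  fixes m :: nat
  assumes "m \<ge> 1"
  shows "\<exists>k l :: nat. \<forall>n \<ge> 1. H_bound m n \<le> enat (k * n + l)"
proof (intro exI allI impI)
  fix n :: nat assume n: "1 \<le> n"
  let ?k = "2 * m + 3 * m * m" and ?l = "3 * m * m + 5 * m + 1"
  have eq: "2 * (m * (n + 1)) + 1 + (m + 2 * m) * (m * (n + 1) + 1) = ?k * n + ?l"
    by (simp add: algebra_simps)
  show "H_bound m n \<le> enat (?k * n + ?l)"
    unfolding H_bound_def
  proof (rule SUP_least)
    fix c assume c: "c \<in> {(ap, bp, am, bm). \<exists>h>0. melnikov m n ap bp am bm h \<noteq> 0}"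
    obtain ap bp am bm where cc: "c = (ap, bp, am, bm)" by (cases c) auto
    have nz: "\<exists>h>0. melnikov m n ap bp am bm h \<noteq> 0" using c cc by simp
    show "(case c of (ap, bp, am, bm) \<Rightarrow> zeros_mult (melnikov m n ap bp am bm) {0<..}) \<le> enat (?k * n + ?l)"
      using melnikov_count[OF assms nz] unfolding cc eq by simp
  qed
qed

end
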